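(* For all $M,N\ge 0$, the labeling $\Lambda$ is an $S$-labeling of the poset of shuffles $W_{MN}$.
   Context: Let $P$ be a finite ranked poset with $\hat0,\hat1$, of rank $n$, and let $\mathcal{M}(P)$ be its set of maximal chains. A labeling is a map $\Lambda:\mathcal{M}(P)\to L^n$, $L$ a totally ordered set. It is an $S$-labeling if it is injective and, for every maximal chain $c=(\hat0=w^0\lessdot\cdots\lessdot w^n=\hat1)$ and every $i\in[n-1]$ with $\Lambda_i(c)\ne\Lambda_{i+1}(c)$, there is a unique maximal chain $c'$ differing from $c$ only in the element of rank $i$ such that $\Lambda(c')$ is obtained from $\Lambda(c)$ by interchanging the entries in positions $i$ and $i+1$. Poset of shuffles: let $\mathcal{A}=\{a_1,\dots,a_M\}$, $\mathcal{X}=\{x_1,\dots,x_N\}$ be disjoint sets; a shuffle word is a word (possibly empty) with distinct letters from $\mathcal{A}\cup\mathcal{X}$ in which the letters of each alphabet appear in increasing order of subscripts; $W_{MN}$ is the set of shuffle words ordered by the reflexive-transitive closure of: $w\lessdot w'$ iff $w'$ is obtained from $w$ by deleting a letter of $\mathcal{A}$ or inserting a letter of $\mathcal{X}$; $\hat0=a_1\cdots a_M$, $\hat1=x_1\cdots x_N$, rank $M+N$. The labeling $\Lambda$: for a maximal chain $c=(\hat0=w^0\lessdot\cdots\lessdot w^{M+N}=\hat1)$, $\Lambda_{i+1}(c)$ is: $x_k$ if $w^{i+1}$ is obtained from $w^i$ by inserting $x_k$; $x_k$ if $w^i=u\,x_k\,a_m\,v$, $w^{i+1}=u\,x_k\,v$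 and this is the first deletion along $c$, starting from $\hat0$, of a letter located immediately after $x_k$ (type (xa)); $a_j$ if $w^{i+1}$ is obtained by deleting $a_j$ and this is not of type (xa). *)

theory Defs
  imports Main
begin

text \<open>A maximal chain of a ranked poset of rank n is represented as a list
  [w0, ..., wn] of length n+1 (index = rank).  A labeling maps each maximal
  chain to a list of labels of length n; the (1-based) label Lambda_i(c) is the
  list entry at index i-1.\<close>

definition is_labeling :: "'p list set \<Rightarrow> nat \<Rightarrow> ('p list \<Rightarrow> 'l list) \<Rightarrow> bool" where
  "is_labeling Ch n Lam \<longleftrightarrow> (\<forall>c\<in>Ch. length (Lam c) = n)"

definition S_labeling :: "'p list set \<Rightarrow> nat \<Rightarrow> ('p list \<Rightarrow> 'l list) \<Rightarrow> bool" where
  "S_labeling Ch n Lam \<longleftrightarrow>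
     is_labeling Ch n Lam \<and>
     inj_on Lam Ch \<and>
     (\<forall>c\<in>Ch. \<forall>i\<in>{1..n-1}.
        Lam c ! (i-1) \<noteq> Lam c ! i \<longrightarrow>
        (\<exists>!c'. c' \<in> Ch \<and> (\<forall>j\<le>n. j \<noteq> i \<longrightarrow> c' ! j = c ! j) \<and>
              Lam c' = (Lam c)[i-1 := Lam c ! i, i := Lam c ! (i-1)]))"

text \<open>Letters: A j stands for a_j, X k stands for x_k; the two alphabets are
  disjoint by construction.\<close>

datatype letter = A nat | X nat

fun is_A :: "letter \<Rightarrow> bool" where
  "is_A (A _) = True" | "is_A (X _) = False"

fun is_X :: "letter \<Rightarrow> bool" where
  "is_X (A _) = False" | "is_X (X _) = True"

fun sub :: "letter \<Rightarrow> nat" where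
  "sub (A j) = j" | "sub (X k) = k"

definition shuffle_word :: "nat \<Rightarrow> nat \<Rightarrow> letter list \<Rightarrow> bool" where
  "shuffle_word M N w \<longleftrightarrow>
     distinct w \<and>
     set w \<subseteq> {A j | j. 1 \<le> j \<and> j \<le> M} \<union> {X k | k. 1 \<le> k \<and> k \<le> N} \<and>
     sorted_wrt (<) (map sub (filter is_A w)) \<and>
     sorted_wrt (<) (map sub (filter is_X w))"

definition shuffle_cover :: "nat \<Rightarrow> nat \<Rightarrow> letter list \<Rightarrow> letter list \<Rightarrow> bool" where
  "shuffle_cover M N w w' \<longleftrightarrow>
     shuffle_word M N w \<and> shuffle_word M N w' \<and>
     ((\<exists>u v j. w = u @ [A j] @ v \<and> w' = u @ v) \<or>
      (\<exists>u v k. w = u @ v \<and> w' = u @ [X k] @ v))"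

definition shuffle_le :: "nat \<Rightarrow> nat \<Rightarrow> letter list \<Rightarrow> letter list \<Rightarrow> bool" where
  "shuffle_le M N = (shuffle_cover M N)\<^sup>*\<^sup>*"

definition shuffle_bot :: "nat \<Rightarrow> letter list" where
  "shuffle_bot M = map A [1..<M+1]"

definition shuffle_top :: "nat \<Rightarrow> letter list" where
  "shuffle_top N = map X [1..<N+1]"

definition shuffle_chains :: "nat \<Rightarrow> nat \<Rightarrow> letter list list set" where
  "shuffle_chains M N =
     {c. length c = M + N + 1 \<and> c ! 0 = shuffle_bot M \<and> c ! (M + N) = shuffle_top N \<and>
         (\<forall>i < M + N. shuffle_cover M N (c ! i) (c ! Suc i))}"

text \<open>Step i of chain c goes from c!i to c!(i+1); its label is Lambda_(i+1)(c).\<close>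

definition ins_step :: "letter list list \<Rightarrow> nat \<Rightarrow> letter \<Rightarrow> bool" where
  "ins_step c i x \<longleftrightarrow> is_X x \<and> (\<exists>u v. c ! i = u @ v \<and> c ! Suc i = u @ [x] @ v)"

definition del_step :: "letter list list \<Rightarrow> nat \<Rightarrow> letter \<Rightarrow> bool" where
  "del_step c i y \<longleftrightarrow> is_A y \<and> (\<exists>u v. c ! i = u @ [y] @ v \<and> c ! Suc i = u @ v)"

definition xa_step :: "letter list list \<Rightarrow> nat \<Rightarrow> nat \<Rightarrow> bool" where
  "xa_step c i k \<longleftrightarrow> (\<exists>u v m. c ! i = u @ [X k, A m] @ v \<and> c ! Suc i = u @ [X k] @ v)"

definition shuffle_label_at :: "letter list list \<Rightarrow> nat \<Rightarrow> letter" where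
  "shuffle_label_at c i =
     (if \<exists>x. ins_step c i x then (THE x. ins_step c i x)
      else if \<exists>k. xa_step c i k \<and> (\<forall>j<i. \<not> xa_step c j k)
           then X (THE k. xa_step c i k)
      else (THE y. del_step c i y))"

definition shuffle_labeling :: "letter list list \<Rightarrow> letter list" where
  "shuffle_labeling c = map (shuffle_label_at c) [0..<length c - 1]"

end

theory Submission
  imports Defs "HOL-Library.Multiset"
begin


definition stepX :: "letter list \<Rightarrow> letter list \<Rightarrow> nat \<Rightarrow> bool" where
  "stepX w w' k \<longleftrightarrow> (\<exists>u v m. w = u @ [X k, A m] @ v \<and> w' = u @ [X k] @ v)"

definition Sx :: "letter list \<Rightarrow> letter list \<Rightarrow> nat set" where
  "Sx w w' = {k. stepX w w' k}"

definition lab :: "nat set \<Rightarrow> letter list \<Rightarrow> letter list \<Rightarrow> letter" where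
  "lab F w w' =
     (if \<exists>x. is_X x \<and> (\<exists>u v. w = u @ v \<and> w' = u @ [x] @ v)
      then (THE x. is_X x \<and> (\<exists>u v. w = u @ v \<and> w' = u @ [x] @ v))
      else if \<exists>k. stepX w w' k \<and> k \<notin> F then X (THE k. stepX w w' k)
      else (THE y. is_A y \<and> (\<exists>u v. w = u @ [y] @ v \<and> w' = u @ v)))"

definition Fh :: "letter list list \<Rightarrow> nat \<Rightarrow> nat set" where
  "Fh c t = {k. \<exists>j<t. xa_step c j k}"

lemma label_at: "shuffle_label_at c t = lab (Fh c t) (c!t) (c!Suc t)"
proof -
  have 1: "ins_step c t = (\<lambda>x. is_X x \<and> (\<exists>u v. c!t = u@v \<and> c!Suc t = u@[x]@v))"
    by (rule ext) (simp add: ins_step_def)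
  have 2: "xa_step c t = stepX (c!t) (c!Suc t)" by (rule ext) (simp add: xa_step_def stepX_def)
  have 3: "\<And>k. (\<forall>j<t. \<not> xa_step c j k) = (k \<notin> Fh c t)" by (simp add: Fh_def)
  have 4: "del_step c t = (\<lambda>y. is_A y \<and> (\<exists>u v. c!t = u @ [y] @ v \<and> c!Suc t = u @ v))"
    by (rule ext) (simp add: del_step_def)
  show ?thesis unfolding shuffle_label_at_def lab_def 1 2 4 by (simp only: 3)
qed

lemma Fh_Suc: "Fh c (Suc t) = Fh c t \<union> Sx (c!t) (c!Suc t)"
  unfolding Fh_def Sx_def xa_step_def stepX_def by (auto simp: less_Suc_eq)

lemma Fh_0: "Fh c 0 = {}" unfolding Fh_def by simp

fun pk :: "letter list \<Rightarrow> nat option" where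
  "pk [] = None"
| "pk (y # ys) = (if ys = [] then (case y of X k \<Rightarrow> Some k | A _ \<Rightarrow> None) else pk ys)"

lemma pk_snoc: "pk (u @ [y]) = (case y of X k \<Rightarrow> Some k | A _ \<Rightarrow> None)"
  by (induction u) auto

lemma pk_Some: "pk u = Some k \<Longrightarrow> \<exists>u0. u = u0 @ [X k]"
proof (induction u)
  case Nil then show ?case by simp
next
  case (Cons y ys)
  show ?case
  proof (cases "ys = []")
    case True then show ?thesis using Cons.prems by (cases y) auto
  next
    case False then show ?thesis using Cons by auto
  qed
qed

definition labdel :: "nat set \<Rightarrow> letter list \<Rightarrow> letter \<Rightarrow> letter" where
  "labdel F u a = (case pk u of Some m \<Rightarrow> if m \<in> F then a else X m | None \<Rightarrow> a)"

lemma dist_split: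
  assumes "distinct (u @ a # v)" "u @ a # v = u' @ a # v'"
  shows "u = u' \<and> v = v'"
  using assms
proof (induction u arbitrary: u')
  case Nil
  then show ?case by (cases u') auto
next
  case (Cons y ys)
  note IH = Cons.IH and pr = Cons.prems
  show ?case
  proof (cases u')
    case Nil then show ?thesis using pr by auto
  next
    case (Cons z zs)
    have d: "distinct (ys @ a # v)" using pr by simp
    have "ys @ a # v = zs @ a # v'" using pr Cons by auto
    then show ?thesis using IH[OF d] Cons pr by auto
  qed
qed

lemma DU:
  assumes "distinct (u @ [a] @ v)" "u @ [a] @ v = u' @ [a'] @ v'" "u @ v = u' @ v'"
  shows "u = u' \<and> a = a' \<and> v = v'"
proof -
  have "a \<notin> set (u @ v)" using assms(1) by auto
  moreover have "distinct (u' @ [a'] @ v')" using assms(1) unfolding assms(2) .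
  then have "a' \<notin> set (u' @ v')" by auto
  moreover have "insert a (set (u @ v)) = insert a' (set (u' @ v'))"
    using arg_cong[OF assms(2), of set] by auto
  ultimately have "a = a'" using assms(3) by auto
  then show ?thesis using dist_split[of u a v u' v'] assms by auto
qed



lemma cover_cases:
  assumes "shuffle_cover M N w w'"
  shows "(\<exists>u a v. is_A a \<and> w = u @ [a] @ v \<and> w' = u @ v) \<or>
         (\<exists>u x v. is_X x \<and> w = u @ v \<and> w' = u @ [x] @ v)"
proof -
  from assms have "(\<exists>u v j. w = u @ [A j] @ v \<and> w' = u @ v) \<or>
      (\<exists>u v k. w = u @ v \<and> w' = u @ [X k] @ v)" unfolding shuffle_cover_def by simp
  then show ?thesis
  proof (elim disjE exE conjE)
    fix u v j assume "w = u @ [A j] @ v" "w' = u @ v"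
    then show ?thesis by (intro disjI1 exI[of _ u] exI[of _ "A j"] exI[of _ v]) simp
  next
    fix u v k assume "w = u @ v" "w' = u @ [X k] @ v"
    then show ?thesis by (intro disjI2 exI[of _ u] exI[of _ "X k"] exI[of _ v]) simp
  qed
qed

lemma cover_sw: "shuffle_cover M N w w' \<Longrightarrow> shuffle_word M N w \<and> shuffle_word M N w'"
  unfolding shuffle_cover_def by simp

lemma sw_distinct: "shuffle_word M N w \<Longrightarrow> distinct w"
  unfolding shuffle_word_def by simp

lemma sw_del: "shuffle_word M N (u @ [y] @ v) \<Longrightarrow> shuffle_word M N (u @ v)"
  unfolding shuffle_word_def by (auto simp: sorted_wrt_append)

lemma sw_build:
  assumes "shuffle_word M N w1" "shuffle_word M N w2"
    "filter is_A w = filter is_A w1" "filter is_X w = filter is_X w2"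
    "distinct w" "set w \<subseteq> set w1 \<union> set w2"
  shows "shuffle_word M N w"
  using assms unfolding shuffle_word_def by auto

lemma cover_delI:
  "shuffle_word M N (u @ [a] @ v) \<Longrightarrow> shuffle_word M N (u @ v) \<Longrightarrow> is_A a
   \<Longrightarrow> shuffle_cover M N (u @ [a] @ v) (u @ v)"
  unfolding shuffle_cover_def by (cases a) auto

lemma cover_insI:
  "shuffle_word M N (u @ v) \<Longrightarrow> shuffle_word M N (u @ [x] @ v) \<Longrightarrow> is_X x
   \<Longrightarrow> shuffle_cover M N (u @ v) (u @ [x] @ v)"
proof -
  assume a: "shuffle_word M N (u @ v)" "shuffle_word M N (u @ [x] @ v)" "is_X x"
  then obtain k where "x = X k" by (cases x) auto
  then show ?thesis unfolding shuffle_cover_def using a by blast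
qed

lemma pk_append: "pk (u @ v) = (if v = [] then pk u else pk v)"
proof (induction u)
  case Nil then show ?case
    by (cases v rule: rev_cases) (auto simp: pk_snoc)
next
  case (Cons y ys) then show ?case
    by (cases v rule: rev_cases) (auto simp: pk_snoc)
qed

lemma pk_A: "is_A a \<Longrightarrow> pk (u @ [a]) = None"
  by (cases a) (auto simp: pk_snoc)

lemma pk_X: "pk (u @ [X k]) = Some k"
  by (auto simp: pk_snoc)

lemma pk_in: "pk u = Some m \<Longrightarrow> X m \<in> set u"
  using pk_Some by fastforce

lemma labdel_cases:
  "labdel F u a = a \<or> (\<exists>m. pk u = Some m \<and> m \<notin> F \<and> labdel F u a = X m)"
  unfolding labdel_def by (auto split: option.splits)

lemma labdel_ext:
  "(\<And>m. o1 = Some m \<Longrightarrow> pk u \<noteq> Some m) \<Longrightarrow> labdel (F \<union> set_option o1) u a = labdel F u a"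
  unfolding labdel_def by (cases o1) (auto split: option.splits)

lemma labdel_self: "labdel (F \<union> set_option (pk u)) u a = a"
  unfolding labdel_def by (auto split: option.splits)

lemma labdel_None: "pk u = None \<Longrightarrow> labdel F u a = a"
  unfolding labdel_def by auto

lemma len_ins_del:
  assumes "u @ v = p @ [y] @ q" "u @ [x] @ v = p @ q" shows False
proof -
  have "length (u @ v) = length (p @ [y] @ q)" "length (u @ [x] @ v) = length (p @ q)"
    using assms by simp_all
  then show False by simp
qed

lemma Sx_ins: "Sx (u @ v) (u @ [x] @ v) = {}"
  unfolding Sx_def stepX_def
proof (clarsimp)
  fix k p q m
  assume "u @ v = p @ X k # A m # q" "u @ x # v = p @ X k # q"
  then show False using len_ins_del[of u v "p @ [X k]" "A m" q x] by simp
qed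

lemma lab_ins:
  assumes d: "distinct (u @ [x] @ v)" and x: "is_X x"
  shows "lab F (u @ v) (u @ [x] @ v) = x"
proof -
  have ex: "\<exists>x'. is_X x' \<and> (\<exists>p q. u @ v = p @ q \<and> u @ [x] @ v = p @ [x'] @ q)"
    using x by blast
  have "(THE x'. is_X x' \<and> (\<exists>p q. u @ v = p @ q \<and> u @ [x] @ v = p @ [x'] @ q)) = x"
  proof (rule the_equality)
    show "is_X x \<and> (\<exists>p q. u @ v = p @ q \<and> u @ [x] @ v = p @ [x] @ q)" using x by blast
  next
    fix x' assume "is_X x' \<and> (\<exists>p q. u @ v = p @ q \<and> u @ [x] @ v = p @ [x'] @ q)"
    then obtain p q where pq: "u @ v = p @ q" "u @ [x] @ v = p @ [x'] @ q" by blast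
    have "distinct (p @ [x'] @ q)" using d unfolding pq(2) .
    then have "x' \<notin> set (u @ v)" using pq(1) by auto
    moreover have "x' \<in> set (u @ [x] @ v)" using pq(2) by simp
    ultimately show "x' = x" by auto
  qed
  then show ?thesis using ex unfolding lab_def by simp
qed

lemma stepX_del:
  assumes d: "distinct (u @ [a] @ v)" and a: "is_A a"
  shows "stepX (u @ [a] @ v) (u @ v) k \<longleftrightarrow> pk u = Some k"
proof
  assume "stepX (u @ [a] @ v) (u @ v) k"
  then obtain p q m where pq: "u @ [a] @ v = (p @ [X k]) @ [A m] @ q" "u @ v = (p @ [X k]) @ q"
    unfolding stepX_def by auto
  from DU[OF d pq] have "u = p @ [X k]" by simp
  then show "pk u = Some k" by (simp add: pk_X)
next
  assume "pk u = Some k"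
  then obtain u0 where u0: "u = u0 @ [X k]" using pk_Some by blast
  obtain m where "a = A m" using a by (cases a) auto
  then show "stepX (u @ [a] @ v) (u @ v) k" unfolding stepX_def u0 by auto
qed

lemma Sx_del:
  "distinct (u @ [a] @ v) \<Longrightarrow> is_A a \<Longrightarrow> Sx (u @ [a] @ v) (u @ v) = set_option (pk u)"
  unfolding Sx_def using stepX_del by auto

lemma lab_del:
  assumes d: "distinct (u @ [a] @ v)" and a: "is_A a"
  shows "lab F (u @ [a] @ v) (u @ v) = labdel F u a"
proof -
  have n1: "\<not> (\<exists>x. is_X x \<and> (\<exists>p q. u @ [a] @ v = p @ q \<and> u @ v = p @ [x] @ q))"
    using len_ins_del by metis
  have th: "(THE y. is_A y \<and> (\<exists>p q. u @ [a] @ v = p @ [y] @ q \<and> u @ v = p @ q)) = a"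
  proof (rule the_equality)
    show "is_A a \<and> (\<exists>p q. u @ [a] @ v = p @ [a] @ q \<and> u @ v = p @ q)" using a by blast
  next
    fix y assume "is_A y \<and> (\<exists>p q. u @ [a] @ v = p @ [y] @ q \<and> u @ v = p @ q)"
    then obtain p q where "u @ [a] @ v = p @ [y] @ q" "u @ v = p @ q" by blast
    then show "y = a" using DU[OF d] by metis
  qed
  have st: "\<And>k. stepX (u @ [a] @ v) (u @ v) k \<longleftrightarrow> pk u = Some k" using stepX_del[OF d a] .
  have L: "lab F (u @ [a] @ v) (u @ v) = (if \<exists>k. stepX (u @ [a] @ v) (u @ v) k \<and> k \<notin> F
       then X (THE k. stepX (u @ [a] @ v) (u @ v) k) else a)"
    unfolding lab_def by (subst if_not_P[OF n1]) (simp only: th)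
  show ?thesis
  proof (cases "pk u")
    case None
    then show ?thesis unfolding L labdel_def st by simp
  next
    case (Some m)
    then have "(THE k. stepX (u @ [a] @ v) (u @ v) k) = m" using st by simp
    then show ?thesis unfolding L labdel_def using st Some by auto
  qed
qed

lemma filter_del: "distinct (p @ [y] @ q) \<Longrightarrow> filter (\<lambda>z. z \<noteq> y) (p @ [y] @ q) = p @ q"
proof -
  assume d: "distinct (p @ [y] @ q)"
  have "filter (\<lambda>z. z \<noteq> y) p = p" by (rule filter_True) (use d in auto)
  moreover have "filter (\<lambda>z. z \<noteq> y) q = q" by (rule filter_True) (use d in auto)
  ultimately show ?thesis by simp
qed



definition swapok where
  "swapok M N F w0 w1 w2 w' \<longleftrightarrow> shuffle_cover M N w0 w' \<and> shuffle_cover M N w' w2 \<and>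
     lab F w0 w' = lab (F \<union> Sx w0 w1) w1 w2 \<and> lab (F \<union> Sx w0 w') w' w2 = lab F w0 w1 \<and>
     Sx w0 w' \<union> Sx w' w2 = Sx w0 w1 \<union> Sx w1 w2"

lemma labdel_pk: "pk u = pk u' \<Longrightarrow> labdel F u a = labdel F u' a"
  unfolding labdel_def by simp

lemma XnA: "is_X x \<Longrightarrow> \<not> is_A x" by (cases x) auto
lemma AnX: "is_A x \<Longrightarrow> \<not> is_X x" by (cases x) auto

lemma shapeI:
  assumes sw0: "shuffle_word M N (p@[b]@r@[a]@v)" and sw1: "shuffle_word M N (p@[b]@r@v)"
    and sw2: "shuffle_word M N (p@r@v)" and a: "is_A a" and b: "is_A b"
  shows "swapok M N F (p@[b]@r@[a]@v) (p@[b]@r@v) (p@r@v) (p@r@[a]@v)"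
proof -
  have d0: "distinct (p@[b]@r@[a]@v)" using sw0 sw_distinct by blast
  have d1: "distinct (p@[b]@r@v)" using sw1 sw_distinct by blast
  have sw': "shuffle_word M N (p@r@[a]@v)" using sw_del[of M N p b "r@[a]@v"] sw0 by simp
  have d': "distinct (p@r@[a]@v)" using sw' sw_distinct by blast
  have cv1: "shuffle_cover M N (p@[b]@r@[a]@v) (p@r@[a]@v)"
    using cover_delI[of M N p b "r@[a]@v"] sw0 sw' b by simp
  have cv2: "shuffle_cover M N (p@r@[a]@v) (p@r@v)"
    using cover_delI[of M N "p@r" a v] sw' sw2 a by simp
  have l01: "lab G (p@[b]@r@[a]@v) (p@[b]@r@v) = labdel G (p@[b]@r) a" for G
    using lab_del[of "p@[b]@r" a v G] d0 a by simp
  have s01: "Sx (p@[b]@r@[a]@v) (p@[b]@r@v) = set_option (pk (p@[b]@r))"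
    using Sx_del[of "p@[b]@r" a v] d0 a by simp
  have l12: "lab G (p@[b]@r@v) (p@r@v) = labdel G p b" for G
    using lab_del[of p b "r@v" G] d1 b by simp
  have s12: "Sx (p@[b]@r@v) (p@r@v) = set_option (pk p)"
    using Sx_del[of p b "r@v"] d1 b by simp
  have l0': "lab G (p@[b]@r@[a]@v) (p@r@[a]@v) = labdel G p b" for G
    using lab_del[of p b "r@[a]@v" G] d0 b by simp
  have s0': "Sx (p@[b]@r@[a]@v) (p@r@[a]@v) = set_option (pk p)"
    using Sx_del[of p b "r@[a]@v"] d0 b by simp
  have l'2: "lab G (p@r@[a]@v) (p@r@v) = labdel G (p@r) a" for G
    using lab_del[of "p@r" a v G] d' a by simp
  have s'2: "Sx (p@r@[a]@v) (p@r@v) = set_option (pk (p@r))"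
    using Sx_del[of "p@r" a v] d' a by simp
  have dj: False if "pk p = Some m" "pk r = Some m" for m
    using pk_in[OF that(1)] pk_in[OF that(2)] d0 by auto
  have g1: "labdel F p b = labdel (F \<union> set_option (pk (p@[b]@r))) p b"
  proof (rule labdel_ext[symmetric])
    fix m assume "pk (p @ [b] @ r) = Some m"
    then show "pk p \<noteq> Some m" using dj pk_A[OF b, of p] by (cases "r = []") (auto simp: pk_append)
  qed
  have g2: "labdel (F \<union> set_option (pk p)) (p@r) a = labdel F (p@[b]@r) a"
  proof (cases "r = []")
    case True
    then show ?thesis using labdel_self[of F p a] labdel_None[OF pk_A[OF b, of p]] by simp
  next
    case False
    have "labdel (F \<union> set_option (pk p)) (p@r) a = labdel F (p@r) a"
      by (rule labdel_ext) (use dj False in \<open>auto simp: pk_append\<close>)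
    also have "\<dots> = labdel F (p@[b]@r) a" by (rule labdel_pk) (use False in \<open>simp add: pk_append\<close>)
    finally show ?thesis .
  qed
  have g3: "set_option (pk p) \<union> set_option (pk (p@r)) = set_option (pk (p@[b]@r)) \<union> set_option (pk p)"
    using pk_A[OF b, of p] by (cases "r = []") (auto simp: pk_append)
  show ?thesis unfolding swapok_def
    using cv1 cv2 g1 g2 g3 l01 l12 l0' l'2 s01 s12 s0' s'2 by simp
qed

lemma shapeII:
  assumes sw0: "shuffle_word M N (u@[a]@r@[b]@q)" and sw1: "shuffle_word M N (u@r@[b]@q)"
    and sw2: "shuffle_word M N (u@r@q)" and a: "is_A a" and b: "is_A b"
  shows "swapok M N F (u@[a]@r@[b]@q) (u@r@[b]@q) (u@r@q) (u@[a]@r@q)"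
proof -
  have d0: "distinct (u@[a]@r@[b]@q)" using sw0 sw_distinct by blast
  have d1: "distinct (u@r@[b]@q)" using sw1 sw_distinct by blast
  have sw': "shuffle_word M N (u@[a]@r@q)" using sw_del[of M N "u@[a]@r" b q] sw0 by simp
  have d': "distinct (u@[a]@r@q)" using sw' sw_distinct by blast
  have cv1: "shuffle_cover M N (u@[a]@r@[b]@q) (u@[a]@r@q)"
    using cover_delI[of M N "u@[a]@r" b q] sw0 sw' b by simp
  have cv2: "shuffle_cover M N (u@[a]@r@q) (u@r@q)"
    using cover_delI[of M N u a "r@q"] sw' sw2 a by simp
  have l01: "lab G (u@[a]@r@[b]@q) (u@r@[b]@q) = labdel G u a" for G
    using lab_del[of u a "r@[b]@q" G] d0 a by simp
  have s01: "Sx (u@[a]@r@[b]@q) (u@r@[b]@q) = set_option (pk u)"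
    using Sx_del[of u a "r@[b]@q"] d0 a by simp
  have l12: "lab G (u@r@[b]@q) (u@r@q) = labdel G (u@r) b" for G
    using lab_del[of "u@r" b q G] d1 b by simp
  have s12: "Sx (u@r@[b]@q) (u@r@q) = set_option (pk (u@r))"
    using Sx_del[of "u@r" b q] d1 b by simp
  have l0': "lab G (u@[a]@r@[b]@q) (u@[a]@r@q) = labdel G (u@[a]@r) b" for G
    using lab_del[of "u@[a]@r" b q G] d0 b by simp
  have s0': "Sx (u@[a]@r@[b]@q) (u@[a]@r@q) = set_option (pk (u@[a]@r))"
    using Sx_del[of "u@[a]@r" b q] d0 b by simp
  have l'2: "lab G (u@[a]@r@q) (u@r@q) = labdel G u a" for G
    using lab_del[of u a "r@q" G] d' a by simp
  have s'2: "Sx (u@[a]@r@q) (u@r@q) = set_option (pk u)"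
    using Sx_del[of u a "r@q"] d' a by simp
  have dj: False if "pk u = Some m" "pk r = Some m" for m
    using pk_in[OF that(1)] pk_in[OF that(2)] d0 by auto
  have g1: "labdel F (u@[a]@r) b = labdel (F \<union> set_option (pk u)) (u@r) b"
  proof (cases "r = []")
    case True
    then show ?thesis using labdel_self[of F u b] labdel_None[OF pk_A[OF a, of u]] by simp
  next
    case False
    have "labdel (F \<union> set_option (pk u)) (u@r) b = labdel F (u@r) b"
      by (rule labdel_ext) (use dj False in \<open>auto simp: pk_append\<close>)
    also have "\<dots> = labdel F (u@[a]@r) b" by (rule labdel_pk) (use False in \<open>simp add: pk_append\<close>)
    finally show ?thesis by simp
  qed
  have g2: "labdel (F \<union> set_option (pk (u@[a]@r))) u a = labdel F u a"
  proof (rule labdel_ext)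
    fix m assume "pk (u @ [a] @ r) = Some m"
    then show "pk u \<noteq> Some m" using dj pk_A[OF a, of u] by (cases "r = []") (auto simp: pk_append)
  qed
  have g3: "set_option (pk (u@[a]@r)) \<union> set_option (pk u) = set_option (pk u) \<union> set_option (pk (u@r))"
    using pk_A[OF a, of u] by (cases "r = []") (auto simp: pk_append)
  show ?thesis unfolding swapok_def
    using cv1 cv2 g1 g2 g3 l01 l12 l0' l'2 s01 s12 s0' s'2 by simp
qed

lemma shapeA:
  assumes sw0: "shuffle_word M N (u@[a]@r@t)" and sw1: "shuffle_word M N (u@[a]@r@[x]@t)"
    and sw2: "shuffle_word M N (u@r@[x]@t)" and a: "is_A a" and x: "is_X x"
  shows "swapok M N F (u@[a]@r@t) (u@[a]@r@[x]@t) (u@r@[x]@t) (u@r@t)"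
proof -
  have d1: "distinct (u@[a]@r@[x]@t)" using sw1 sw_distinct by blast
  have d0: "distinct (u@[a]@r@t)" using sw0 sw_distinct by blast
  have d2: "distinct (u@r@[x]@t)" using sw2 sw_distinct by blast
  have sw': "shuffle_word M N (u@r@t)" using sw_del[of M N u a "r@t"] sw0 by simp
  have cv1: "shuffle_cover M N (u@[a]@r@t) (u@r@t)"
    using cover_delI[of M N u a "r@t"] sw0 sw' a by simp
  have cv2: "shuffle_cover M N (u@r@t) (u@r@[x]@t)"
    using cover_insI[of M N "u@r" t x] sw' sw2 x by simp
  have l01: "lab G (u@[a]@r@t) (u@[a]@r@[x]@t) = x" for G
    using lab_ins[of "u@[a]@r" x t G] d1 x by simp
  have s01: "Sx (u@[a]@r@t) (u@[a]@r@[x]@t) = {}"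
    using Sx_ins[of "u@[a]@r" t x] by simp
  have l12: "lab G (u@[a]@r@[x]@t) (u@r@[x]@t) = labdel G u a" for G
    using lab_del[of u a "r@[x]@t" G] d1 a by simp
  have s12: "Sx (u@[a]@r@[x]@t) (u@r@[x]@t) = set_option (pk u)"
    using Sx_del[of u a "r@[x]@t"] d1 a by simp
  have l0': "lab G (u@[a]@r@t) (u@r@t) = labdel G u a" for G
    using lab_del[of u a "r@t" G] d0 a by simp
  have s0': "Sx (u@[a]@r@t) (u@r@t) = set_option (pk u)"
    using Sx_del[of u a "r@t"] d0 a by simp
  have l'2: "lab G (u@r@t) (u@r@[x]@t) = x" for G
    using lab_ins[of "u@r" x t G] d2 x by simp
  have s'2: "Sx (u@r@t) (u@r@[x]@t) = {}"
    using Sx_ins[of "u@r" t x] by simp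
  show ?thesis unfolding swapok_def
    using cv1 cv2 l01 l12 l0' l'2 s01 s12 s0' s'2 by simp
qed

lemma shapeB:
  assumes sw0: "shuffle_word M N (s@r@[a]@v)" and sw1: "shuffle_word M N (s@[x]@r@[a]@v)"
    and sw2: "shuffle_word M N (s@[x]@r@v)" and a: "is_A a" and x: "is_X x" and r: "r \<noteq> []"
  shows "swapok M N F (s@r@[a]@v) (s@[x]@r@[a]@v) (s@[x]@r@v) (s@r@v)"
proof -
  have d1: "distinct (s@[x]@r@[a]@v)" using sw1 sw_distinct by blast
  have d0: "distinct (s@r@[a]@v)" using sw0 sw_distinct by blast
  have d2: "distinct (s@[x]@r@v)" using sw2 sw_distinct by blast
  have sw': "shuffle_word M N (s@r@v)" using sw_del[of M N "s@r" a v] sw0 by simp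
  have cv1: "shuffle_cover M N (s@r@[a]@v) (s@r@v)"
    using cover_delI[of M N "s@r" a v] sw0 sw' a by simp
  have cv2: "shuffle_cover M N (s@r@v) (s@[x]@r@v)"
    using cover_insI[of M N s "r@v" x] sw' sw2 x by simp
  have l01: "lab G (s@r@[a]@v) (s@[x]@r@[a]@v) = x" for G
    using lab_ins[of s x "r@[a]@v" G] d1 x by simp
  have s01: "Sx (s@r@[a]@v) (s@[x]@r@[a]@v) = {}"
    using Sx_ins[of s "r@[a]@v" x] by simp
  have l12: "lab G (s@[x]@r@[a]@v) (s@[x]@r@v) = labdel G (s@[x]@r) a" for G
    using lab_del[of "s@[x]@r" a v G] d1 a by simp
  have s12: "Sx (s@[x]@r@[a]@v) (s@[x]@r@v) = set_option (pk (s@[x]@r))"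
    using Sx_del[of "s@[x]@r" a v] d1 a by simp
  have l0': "lab G (s@r@[a]@v) (s@r@v) = labdel G (s@r) a" for G
    using lab_del[of "s@r" a v G] d0 a by simp
  have s0': "Sx (s@r@[a]@v) (s@r@v) = set_option (pk (s@r))"
    using Sx_del[of "s@r" a v] d0 a by simp
  have l'2: "lab G (s@r@v) (s@[x]@r@v) = x" for G
    using lab_ins[of s x "r@v" G] d2 x by simp
  have s'2: "Sx (s@r@v) (s@[x]@r@v) = {}"
    using Sx_ins[of s "r@v" x] by simp
  have pe: "pk (s@r) = pk (s@[x]@r)" using r by (simp add: pk_append)
  have g: "labdel F (s@r) a = labdel F (s@[x]@r) a" by (rule labdel_pk[OF pe])
  show ?thesis unfolding swapok_def
    using cv1 cv2 l01 l12 l0' l'2 s01 s12 s0' s'2 g pe by simp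
qed

lemma shapeDI1:
  assumes sw0: "shuffle_word M N (s@us@[a]@v)" and sw1: "shuffle_word M N (s@us@v)"
    and sw2: "shuffle_word M N (s@[x]@us@v)" and a: "is_A a" and x: "is_X x" and us: "us \<noteq> []"
  shows "swapok M N F (s@us@[a]@v) (s@us@v) (s@[x]@us@v) (s@[x]@us@[a]@v)"
proof -
  have d0: "distinct (s@us@[a]@v)" using sw0 sw_distinct by blast
  have d2: "distinct (s@[x]@us@v)" using sw2 sw_distinct by blast
  have xa: "x \<noteq> a" using x a by (cases x) auto
  have d': "distinct (s@[x]@us@[a]@v)" using d0 d2 xa by auto
  have sw': "shuffle_word M N (s@[x]@us@[a]@v)"
    by (rule sw_build[OF sw0 sw2]) (use d' x a XnA AnX in auto)
  have cv1: "shuffle_cover M N (s@us@[a]@v) (s@[x]@us@[a]@v)"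
    using cover_insI[of M N s "us@[a]@v" x] sw0 sw' x by simp
  have cv2: "shuffle_cover M N (s@[x]@us@[a]@v) (s@[x]@us@v)"
    using cover_delI[of M N "s@[x]@us" a v] sw' sw2 a by simp
  have l01: "lab G (s@us@[a]@v) (s@us@v) = labdel G (s@us) a" for G
    using lab_del[of "s@us" a v G] d0 a by simp
  have s01: "Sx (s@us@[a]@v) (s@us@v) = set_option (pk (s@us))"
    using Sx_del[of "s@us" a v] d0 a by simp
  have l12: "lab G (s@us@v) (s@[x]@us@v) = x" for G
    using lab_ins[of s x "us@v" G] d2 x by simp
  have s12: "Sx (s@us@v) (s@[x]@us@v) = {}"
    using Sx_ins[of s "us@v" x] by simp
  have l0': "lab G (s@us@[a]@v) (s@[x]@us@[a]@v) = x" for G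
    using lab_ins[of s x "us@[a]@v" G] d' x by simp
  have s0': "Sx (s@us@[a]@v) (s@[x]@us@[a]@v) = {}"
    using Sx_ins[of s "us@[a]@v" x] by simp
  have l'2: "lab G (s@[x]@us@[a]@v) (s@[x]@us@v) = labdel G (s@[x]@us) a" for G
    using lab_del[of "s@[x]@us" a v G] d' a by simp
  have s'2: "Sx (s@[x]@us@[a]@v) (s@[x]@us@v) = set_option (pk (s@[x]@us))"
    using Sx_del[of "s@[x]@us" a v] d' a by simp
  have pe: "pk (s@us) = pk (s@[x]@us)" using us by (simp add: pk_append)
  have g: "labdel F (s@us) a = labdel F (s@[x]@us) a" by (rule labdel_pk[OF pe])
  show ?thesis unfolding swapok_def
    using cv1 cv2 l01 l12 l0' l'2 s01 s12 s0' s'2 g pe by simp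
qed

lemma shapeDI2:
  assumes sw0: "shuffle_word M N (u@[a]@us@t)" and sw1: "shuffle_word M N (u@us@t)"
    and sw2: "shuffle_word M N (u@us@[x]@t)" and a: "is_A a" and x: "is_X x"
  shows "swapok M N F (u@[a]@us@t) (u@us@t) (u@us@[x]@t) (u@[a]@us@[x]@t)"
proof -
  have d0: "distinct (u@[a]@us@t)" using sw0 sw_distinct by blast
  have d2: "distinct (u@us@[x]@t)" using sw2 sw_distinct by blast
  have xa: "x \<noteq> a" using x a by (cases x) auto
  have d': "distinct (u@[a]@us@[x]@t)" using d0 d2 xa by auto
  have sw': "shuffle_word M N (u@[a]@us@[x]@t)"
    by (rule sw_build[OF sw0 sw2]) (use d' x a XnA AnX in auto)
  have cv1: "shuffle_cover M N (u@[a]@us@t) (u@[a]@us@[x]@t)"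
    using cover_insI[of M N "u@[a]@us" t x] sw0 sw' x by simp
  have cv2: "shuffle_cover M N (u@[a]@us@[x]@t) (u@us@[x]@t)"
    using cover_delI[of M N u a "us@[x]@t"] sw' sw2 a by simp
  have l01: "lab G (u@[a]@us@t) (u@us@t) = labdel G u a" for G
    using lab_del[of u a "us@t" G] d0 a by simp
  have s01: "Sx (u@[a]@us@t) (u@us@t) = set_option (pk u)"
    using Sx_del[of u a "us@t"] d0 a by simp
  have l12: "lab G (u@us@t) (u@us@[x]@t) = x" for G
    using lab_ins[of "u@us" x t G] d2 x by simp
  have s12: "Sx (u@us@t) (u@us@[x]@t) = {}"
    using Sx_ins[of "u@us" t x] by simp
  have l0': "lab G (u@[a]@us@t) (u@[a]@us@[x]@t) = x" for G
    using lab_ins[of "u@[a]@us" x t G] d' x by simp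
  have s0': "Sx (u@[a]@us@t) (u@[a]@us@[x]@t) = {}"
    using Sx_ins[of "u@[a]@us" t x] by simp
  have l'2: "lab G (u@[a]@us@[x]@t) (u@us@[x]@t) = labdel G u a" for G
    using lab_del[of u a "us@[x]@t" G] d' a by simp
  have s'2: "Sx (u@[a]@us@[x]@t) (u@us@[x]@t) = set_option (pk u)"
    using Sx_del[of u a "us@[x]@t"] d' a by simp
  show ?thesis unfolding swapok_def
    using cv1 cv2 l01 l12 l0' l'2 s01 s12 s0' s'2 by simp
qed

lemma shapeII1:
  assumes sw0: "shuffle_word M N (p@us@t)" and sw1: "shuffle_word M N (p@us@[x]@t)"
    and sw2: "shuffle_word M N (p@[y]@us@[x]@t)" and x: "is_X x" and y: "is_X y"
  shows "swapok M N F (p@us@t) (p@us@[x]@t) (p@[y]@us@[x]@t) (p@[y]@us@t)"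
proof -
  have d1: "distinct (p@us@[x]@t)" using sw1 sw_distinct by blast
  have d2: "distinct (p@[y]@us@[x]@t)" using sw2 sw_distinct by blast
  have sw': "shuffle_word M N (p@[y]@us@t)" using sw_del[of M N "p@[y]@us" x t] sw2 by simp
  have d': "distinct (p@[y]@us@t)" using sw' sw_distinct by blast
  have cv1: "shuffle_cover M N (p@us@t) (p@[y]@us@t)"
    using cover_insI[of M N p "us@t" y] sw0 sw' y by simp
  have cv2: "shuffle_cover M N (p@[y]@us@t) (p@[y]@us@[x]@t)"
    using cover_insI[of M N "p@[y]@us" t x] sw' sw2 x by simp
  have l01: "lab G (p@us@t) (p@us@[x]@t) = x" for G
    using lab_ins[of "p@us" x t G] d1 x by simp
  have s01: "Sx (p@us@t) (p@us@[x]@t) = {}" using Sx_ins[of "p@us" t x] by simp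
  have l12: "lab G (p@us@[x]@t) (p@[y]@us@[x]@t) = y" for G
    using lab_ins[of p y "us@[x]@t" G] d2 y by simp
  have s12: "Sx (p@us@[x]@t) (p@[y]@us@[x]@t) = {}" using Sx_ins[of p "us@[x]@t" y] by simp
  have l0': "lab G (p@us@t) (p@[y]@us@t) = y" for G
    using lab_ins[of p y "us@t" G] d' y by simp
  have s0': "Sx (p@us@t) (p@[y]@us@t) = {}" using Sx_ins[of p "us@t" y] by simp
  have l'2: "lab G (p@[y]@us@t) (p@[y]@us@[x]@t) = x" for G
    using lab_ins[of "p@[y]@us" x t G] d2 x by simp
  have s'2: "Sx (p@[y]@us@t) (p@[y]@us@[x]@t) = {}" using Sx_ins[of "p@[y]@us" t x] by simp
  show ?thesis unfolding swapok_def
    using cv1 cv2 l01 l12 l0' l'2 s01 s12 s0' s'2 by simp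
qed

lemma shapeII2:
  assumes sw0: "shuffle_word M N (s@r@q)" and sw1: "shuffle_word M N (s@[x]@r@q)"
    and sw2: "shuffle_word M N (s@[x]@r@[y]@q)" and x: "is_X x" and y: "is_X y"
  shows "swapok M N F (s@r@q) (s@[x]@r@q) (s@[x]@r@[y]@q) (s@r@[y]@q)"
proof -
  have d1: "distinct (s@[x]@r@q)" using sw1 sw_distinct by blast
  have d2: "distinct (s@[x]@r@[y]@q)" using sw2 sw_distinct by blast
  have sw': "shuffle_word M N (s@r@[y]@q)" using sw_del[of M N s x "r@[y]@q"] sw2 by simp
  have d': "distinct (s@r@[y]@q)" using sw' sw_distinct by blast
  have cv1: "shuffle_cover M N (s@r@q) (s@r@[y]@q)"
    using cover_insI[of M N "s@r" q y] sw0 sw' y by simp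
  have cv2: "shuffle_cover M N (s@r@[y]@q) (s@[x]@r@[y]@q)"
    using cover_insI[of M N s "r@[y]@q" x] sw' sw2 x by simp
  have l01: "lab G (s@r@q) (s@[x]@r@q) = x" for G
    using lab_ins[of s x "r@q" G] d1 x by simp
  have s01: "Sx (s@r@q) (s@[x]@r@q) = {}" using Sx_ins[of s "r@q" x] by simp
  have l12: "lab G (s@[x]@r@q) (s@[x]@r@[y]@q) = y" for G
    using lab_ins[of "s@[x]@r" y q G] d2 y by simp
  have s12: "Sx (s@[x]@r@q) (s@[x]@r@[y]@q) = {}" using Sx_ins[of "s@[x]@r" q y] by simp
  have l0': "lab G (s@r@q) (s@r@[y]@q) = y" for G
    using lab_ins[of "s@r" y q G] d' y by simp
  have s0': "Sx (s@r@q) (s@r@[y]@q) = {}" using Sx_ins[of "s@r" q y] by simp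
  have l'2: "lab G (s@r@[y]@q) (s@[x]@r@[y]@q) = x" for G
    using lab_ins[of s x "r@[y]@q" G] d2 x by simp
  have s'2: "Sx (s@r@[y]@q) (s@[x]@r@[y]@q) = {}" using Sx_ins[of s "r@[y]@q" x] by simp
  show ?thesis unfolding swapok_def
    using cv1 cv2 l01 l12 l0' l'2 s01 s12 s0' s'2 by simp
qed



lemma swap_word:
  assumes c1: "shuffle_cover M N w0 w1" and c2: "shuffle_cover M N w1 w2"
    and F: "\<forall>k\<in>F. X k \<in> set w0"
    and ne: "lab F w0 w1 \<noteq> lab (F \<union> Sx w0 w1) w1 w2"
  shows "\<exists>w'. swapok M N F w0 w1 w2 w'"
proof -
  have sw0: "shuffle_word M N w0" and sw1: "shuffle_word M N w1" and sw2: "shuffle_word M N w2"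
    using cover_sw[OF c1] cover_sw[OF c2] by auto
  from cover_cases[OF c1] cover_cases[OF c2] show ?thesis
  proof (elim disjE exE conjE)
    fix u a v p b q
    assume a: "is_A a" and e0: "w0 = u @ [a] @ v" and e1: "w1 = u @ v"
      and b: "is_A b" and e1': "w1 = p @ [b] @ q" and e2: "w2 = p @ q"
    have "u @ v = p @ ([b] @ q)" using e1 e1' by simp
    then obtain us where "(u = p @ us \<and> us @ v = [b] @ q) \<or> (u @ us = p \<and> v = us @ [b] @ q)"
      unfolding append_eq_append_conv2 by blast
    then show ?thesis
    proof (elim disjE conjE)
      assume h: "u = p @ us" "us @ v = [b] @ q"
      show ?thesis
      proof (cases us)
        case Nil
        have "swapok M N F (u@[a]@[]@[b]@q) (u@[]@[b]@q) (u@[]@q) (u@[a]@[]@q)"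
          by (rule shapeII) (use sw0 sw1 sw2 e0 e1 e2 h Nil a b in simp_all)
        then show ?thesis using e0 e1 e2 h Nil by auto
      next
        case (Cons b' r)
        have "swapok M N F (p@[b]@r@[a]@v) (p@[b]@r@v) (p@r@v) (p@r@[a]@v)"
          by (rule shapeI) (use sw0 sw1 sw2 e0 e1 e2 h Cons a b in simp_all)
        then show ?thesis using e0 e1 e2 h Cons by auto
      qed
    next
      assume h: "u @ us = p" "v = us @ [b] @ q"
      have "swapok M N F (u@[a]@us@[b]@q) (u@us@[b]@q) (u@us@q) (u@[a]@us@q)"
        by (rule shapeII) (use sw0 sw1 sw2 e0 e1 e2 h(1)[symmetric] h(2) a b in simp_all)
      then show ?thesis using e0 e1 e2 h by auto
    qed
  next
    fix u a v s x t
    assume a: "is_A a" and e0: "w0 = u @ [a] @ v" and e1: "w1 = u @ v"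
      and x: "is_X x" and e1': "w1 = s @ t" and e2: "w2 = s @ [x] @ t"
    have "u @ v = s @ t" using e1 e1' by simp
    then obtain us where "(u = s @ us \<and> us @ v = t) \<or> (u @ us = s \<and> v = us @ t)"
      unfolding append_eq_append_conv2 by blast
    then show ?thesis
    proof (elim disjE conjE)
      assume h: "u = s @ us" "us @ v = t"
      show ?thesis
      proof (cases "us = []")
        case True
        have "swapok M N F (u@[a]@[]@v) (u@[]@v) (u@[]@[x]@v) (u@[a]@[]@[x]@v)"
          by (rule shapeDI2) (use sw0 sw1 sw2 e0 e1 e2 h True a x in simp_all)
        then show ?thesis using e0 e1 e2 h True by auto
      next
        case False
        have "swapok M N F (s@us@[a]@v) (s@us@v) (s@[x]@us@v) (s@[x]@us@[a]@v)"
          by (rule shapeDI1) (use sw0 sw1 sw2 e0 e1 e2 h False a x in simp_all)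
        then show ?thesis using e0 e1 e2 h by auto
      qed
    next
      assume h: "u @ us = s" "v = us @ t"
      have "swapok M N F (u@[a]@us@t) (u@us@t) (u@us@[x]@t) (u@[a]@us@[x]@t)"
        by (rule shapeDI2) (use sw0 sw1 sw2 e0 e1 e2 h(1)[symmetric] h(2) a x in simp_all)
      then show ?thesis using e0 e1 e2 h by auto
    qed
  next
    fix s x t u a v
    assume x: "is_X x" and e0: "w0 = s @ t" and e1: "w1 = s @ [x] @ t"
      and a: "is_A a" and e1': "w1 = u @ [a] @ v" and e2: "w2 = u @ v"
    have xa: "x \<noteq> a" using x a XnA by blast
    have "s @ (x # t) = u @ (a # v)" using e1 e1' by simp
    then obtain us where "(s = u @ us \<and> us @ x # t = a # v) \<or> (s @ us = u \<and> x # t = us @ a # v)"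
      unfolding append_eq_append_conv2 by blast
    then show ?thesis
    proof (elim disjE conjE)
      assume h: "s = u @ us" "us @ x # t = a # v"
      then obtain r where r: "us = a # r" "v = r @ x # t" using xa by (cases us) auto
      have "swapok M N F (u@[a]@r@t) (u@[a]@r@[x]@t) (u@r@[x]@t) (u@r@t)"
        by (rule shapeA) (use sw0 sw1 sw2 e0 e1 e2 h r a x in simp_all)
      then show ?thesis using e0 e1 e2 h r by auto
    next
      assume h: "s @ us = u" "x # t = us @ a # v"
      then obtain r where r: "us = x # r" "t = r @ a # v" using xa by (cases us) auto
      show ?thesis
      proof (cases "r = []")
        case False
        have "swapok M N F (s@r@[a]@v) (s@[x]@r@[a]@v) (s@[x]@r@v) (s@r@v)"
          by (rule shapeB) (use sw0 sw1 sw2 e0 e1 e2 h(1)[symmetric] h(2) r False a x in simp_all)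
        then show ?thesis using e0 e1 e2 h r by auto
      next
        case True
        obtain k where k: "x = X k" using x by (cases x) auto
        have "shuffle_word M N (s @ [x] @ [a] @ v)" using sw1 e1 r True by simp
        then have d1: "distinct (s @ [x] @ [a] @ v)" by (rule sw_distinct)
        have kF: "k \<notin> F" using F d1 e0 r True k by auto
        have l1: "lab F w0 w1 = x" using lab_ins[of s x t F] e0 e1 d1 x r True by simp
        have s1: "Sx w0 w1 = {}" using Sx_ins[of s t x] e0 e1 by simp
        have l2: "lab F w1 w2 = labdel F (s @ [x]) a"
          using lab_del[of "s @ [x]" a v F] d1 a e1' e2 h(1)[symmetric] r True by simp
        have "labdel F (s @ [x]) a = x" using kF k pk_X[of s k] unfolding labdel_def by simp
        then show ?thesis using ne l1 l2 s1 by simp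
      qed
    qed
  next
    fix s x t p y q
    assume x: "is_X x" and e0: "w0 = s @ t" and e1: "w1 = s @ [x] @ t"
      and y: "is_X y" and e1': "w1 = p @ q" and e2: "w2 = p @ [y] @ q"
    have "s @ (x # t) = p @ q" using e1 e1' by simp
    then obtain us where "(s = p @ us \<and> us @ x # t = q) \<or> (s @ us = p \<and> x # t = us @ q)"
      unfolding append_eq_append_conv2 by blast
    then show ?thesis
    proof (elim disjE conjE)
      assume h: "s = p @ us" "us @ x # t = q"
      have "swapok M N F (p@us@t) (p@us@[x]@t) (p@[y]@us@[x]@t) (p@[y]@us@t)"
        by (rule shapeII1) (use sw0 sw1 sw2 e0 e1 e2 h x y in simp_all)
      then show ?thesis using e0 e1 e2 h by auto
    next
      assume h: "s @ us = p" "x # t = us @ q"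
      show ?thesis
      proof (cases us)
        case Nil
        have "swapok M N F (s@[]@t) (s@[]@[x]@t) (s@[y]@[]@[x]@t) (s@[y]@[]@t)"
          by (rule shapeII1) (use sw0 sw1 sw2 e0 e1 e2 h(1)[symmetric] h(2) Nil x y in simp_all)
        then show ?thesis using e0 e1 e2 h Nil by auto
      next
        case (Cons x' r)
        have "swapok M N F (s@r@q) (s@[x]@r@q) (s@[x]@r@[y]@q) (s@r@[y]@q)"
          by (rule shapeII2) (use sw0 sw1 sw2 e0 e1 e2 h(1)[symmetric] h(2) Cons x y in simp_all)
        then show ?thesis using e0 e1 e2 h Cons by auto
      qed
    qed
  qed
qed



lemma labdel_in: "labdel F u a \<in> set (u @ [a])"
  using labdel_cases[of F u a] pk_in by auto

lemma del_det:
  assumes d: "distinct w" and e1: "w = u1 @ [a1] @ v1" and e2: "w = u2 @ [a2] @ v2"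
    and a1: "is_A a1" and a2: "is_A a2" and l: "labdel F u1 a1 = labdel F u2 a2"
  shows "u1 @ v1 = u2 @ v2"
proof -
  have c1: "labdel F u1 a1 = a1 \<or> (\<exists>m. pk u1 = Some m \<and> m \<notin> F \<and> labdel F u1 a1 = X m)"
    by (rule labdel_cases)
  have c2: "labdel F u2 a2 = a2 \<or> (\<exists>m. pk u2 = Some m \<and> m \<notin> F \<and> labdel F u2 a2 = X m)"
    by (rule labdel_cases)
  from c1 c2 show ?thesis
  proof (elim disjE exE conjE)
    assume "labdel F u1 a1 = a1" "labdel F u2 a2 = a2"
    then have "a1 = a2" using l by simp
    then show ?thesis using dist_split[of u1 a1 v1 u2 v2] d e1 e2 by simp
  next
    fix m assume "labdel F u1 a1 = a1" "labdel F u2 a2 = X m"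
    then have "a1 = X m" using l by simp
    then show ?thesis using a1 by simp
  next
    fix m assume "labdel F u2 a2 = a2" "labdel F u1 a1 = X m"
    then have "a2 = X m" using l by simp
    then show ?thesis using a2 by simp
  next
    fix m m' assume h: "pk u1 = Some m" "labdel F u1 a1 = X m" "pk u2 = Some m'" "labdel F u2 a2 = X m'"
    then have mm: "m = m'" using l by simp
    obtain u1' where u1: "u1 = u1' @ [X m]" using pk_Some[OF h(1)] by blast
    obtain u2' where u2: "u2 = u2' @ [X m]" using pk_Some[OF h(3)] mm by blast
    have eq: "u1' @ X m # (a1 # v1) = u2' @ X m # (a2 # v2)" using e1 e2 u1 u2 by simp
    have dd: "distinct (u1' @ X m # (a1 # v1))" using d e1 u1 by simp
    have "u1' = u2' \<and> a1 # v1 = a2 # v2" by (rule dist_split[OF dd eq])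
    then show ?thesis using u1 u2 by simp
  qed
qed

lemma FS:
  assumes c1: "shuffle_cover M N w w1" and c2: "shuffle_cover M N w w2"
    and l: "lab F w w1 = lab F w w2"
  shows "w1 = w2 \<or> (\<exists>s1 t1 s2 t2 x. is_X x \<and> w = s1 @ t1 \<and> w = s2 @ t2 \<and>
            w1 = s1 @ [x] @ t1 \<and> w2 = s2 @ [x] @ t2)"
proof -
  have d: "distinct w" using cover_sw[OF c1] sw_distinct by blast
  have d1: "distinct w1" using cover_sw[OF c1] sw_distinct by blast
  have d2: "distinct w2" using cover_sw[OF c2] sw_distinct by blast
  from cover_cases[OF c1] cover_cases[OF c2] show ?thesis
  proof (elim disjE exE conjE)
    fix u1 a1 v1 u2 a2 v2
    assume h: "is_A a1" "w = u1 @ [a1] @ v1" "w1 = u1 @ v1" "is_A a2" "w = u2 @ [a2] @ v2" "w2 = u2 @ v2"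
    have dd1: "distinct (u1 @ [a1] @ v1)" using d unfolding h(2) .
    have dd2: "distinct (u2 @ [a2] @ v2)" using d unfolding h(5) .
    have "lab F w w1 = labdel F u1 a1" unfolding h(2) h(3) by (rule lab_del[OF dd1 h(1)])
    moreover have "lab F w w2 = labdel F u2 a2" unfolding h(5) h(6) by (rule lab_del[OF dd2 h(4)])
    ultimately have "labdel F u1 a1 = labdel F u2 a2" using l by simp
    then show ?thesis using del_det[OF d h(2) h(5) h(1) h(4)] h by simp
  next
    fix u1 a1 v1 s x t
    assume h: "is_A a1" "w = u1 @ [a1] @ v1" "w1 = u1 @ v1" "is_X x" "w = s @ t" "w2 = s @ [x] @ t"
    have dd1: "distinct (u1 @ [a1] @ v1)" using d unfolding h(2) .
    have dd2: "distinct (s @ [x] @ t)" using d2 unfolding h(6) .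
    have "lab F w w1 = labdel F u1 a1" unfolding h(2) h(3) by (rule lab_del[OF dd1 h(1)])
    moreover have "lab F w w2 = x" unfolding h(5) h(6) by (rule lab_ins[OF dd2 h(4)])
    ultimately have lx: "labdel F u1 a1 = x" using l by simp
    have "x \<notin> set w" unfolding h(5) using dd2 by simp
    moreover have "labdel F u1 a1 \<in> set w" unfolding h(2) using labdel_in[of F u1 a1] by auto
    ultimately show ?thesis using lx by simp
  next
    fix s x t u1 a1 v1
    assume h: "is_X x" "w = s @ t" "w1 = s @ [x] @ t" "is_A a1" "w = u1 @ [a1] @ v1" "w2 = u1 @ v1"
    have dd1: "distinct (u1 @ [a1] @ v1)" using d unfolding h(5) .
    have dd2: "distinct (s @ [x] @ t)" using d1 unfolding h(3) .
    have "lab F w w2 = labdel F u1 a1" unfolding h(5) h(6) by (rule lab_del[OF dd1 h(4)])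
    moreover have "lab F w w1 = x" unfolding h(2) h(3) by (rule lab_ins[OF dd2 h(1)])
    ultimately have lx: "labdel F u1 a1 = x" using l by simp
    have "x \<notin> set w" unfolding h(2) using dd2 by simp
    moreover have "labdel F u1 a1 \<in> set w" unfolding h(5) using labdel_in[of F u1 a1] by auto
    ultimately show ?thesis using lx by simp
  next
    fix s x t s' x' t'
    assume h: "is_X x" "w = s @ t" "w1 = s @ [x] @ t" "is_X x'" "w = s' @ t'" "w2 = s' @ [x'] @ t'"
    have dd1: "distinct (s @ [x] @ t)" using d1 unfolding h(3) .
    have dd2: "distinct (s' @ [x'] @ t')" using d2 unfolding h(6) .
    have "lab F w w1 = x" unfolding h(2) h(3) by (rule lab_ins[OF dd1 h(1)])
    moreover have "lab F w w2 = x'" unfolding h(5) h(6) by (rule lab_ins[OF dd2 h(4)])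
    ultimately have "x = x'" using l by simp
    then show ?thesis using h by blast
  qed
qed

lemma set_ins_eq:
  assumes "distinct (p @ [y] @ q)" "distinct (p' @ [y'] @ q')" "set (p @ q) = set (p' @ q')"
    "p @ [y] @ q = p' @ [y'] @ q'"
  shows "y = y'"
proof -
  have "y \<notin> set (p @ q)" "y' \<notin> set (p' @ q')" using assms(1,2) by auto
  moreover have "insert y (set (p @ q)) = insert y' (set (p' @ q'))"
    using arg_cong[OF assms(4), of set] by auto
  ultimately show ?thesis using assms(3) by auto
qed

lemma Uh:
  assumes c1: "shuffle_cover M N (s @ [x] @ us @ t) w2" and c2: "shuffle_cover M N (s @ us @ [x] @ t) w2"
    and us: "us \<noteq> []" and x: "is_X x"
    and F: "\<forall>k\<in>F. X k \<in> set (s @ us @ t)"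
    and l: "lab F (s @ [x] @ us @ t) w2 = lab F (s @ us @ [x] @ t) w2"
  shows False
proof -
  have d1: "distinct (s @ [x] @ us @ t)" using cover_sw[OF c1] sw_distinct by blast
  have d1': "distinct (s @ us @ [x] @ t)" using cover_sw[OF c2] sw_distinct by blast
  have d2: "distinct w2" using cover_sw[OF c1] sw_distinct by blast
  have xus: "x \<notin> set us" using d1 by simp
  have seq: "set (s @ [x] @ us @ t) = set (s @ us @ [x] @ t)" by auto
  from cover_cases[OF c1] cover_cases[OF c2] show False
  proof (elim disjE exE conjE)
    fix p1 b1 q1 p2 b2 q2
    assume h: "is_A b1" "s @ [x] @ us @ t = p1 @ [b1] @ q1" "w2 = p1 @ q1"
      "is_A b2" "s @ us @ [x] @ t = p2 @ [b2] @ q2" "w2 = p2 @ q2"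
    have "b1 = b2"
    proof (rule ccontr)
      assume "b1 \<noteq> b2"
      have "b1 \<in> set (s @ [x] @ us @ t)" unfolding h(2) by simp
      then have "b1 \<in> set (s @ us @ [x] @ t)" using seq by blast
      then have "b1 \<in> set (p2 @ [b2] @ q2)" unfolding h(5) .
      then have "b1 \<in> set w2" using \<open>b1 \<noteq> b2\<close> h(6) by auto
      moreover have "distinct (p1 @ [b1] @ q1)" using d1 unfolding h(2) .
      then have "b1 \<notin> set w2" using h(3) by auto
      ultimately show False by simp
    qed
    define b where "b = b1"
    have xb: "x \<noteq> b" using x h(1) XnA b_def by blast
    have dp1: "distinct (p1 @ [b1] @ q1)" using d1 unfolding h(2) .
    have dp2: "distinct (p2 @ [b2] @ q2)" using d1' unfolding h(5) .
    have f1: "filter (\<lambda>z. z \<noteq> b) (s @ [x] @ us @ t) = w2"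
      unfolding h(2) h(3) b_def by (rule filter_del[OF dp1])
    have f2: "filter (\<lambda>z. z \<noteq> b) (s @ us @ [x] @ t) = w2"
      unfolding h(5) h(6) b_def \<open>b1 = b2\<close> by (rule filter_del[OF dp2])
    let ?U = "filter (\<lambda>z. z \<noteq> b) us" and ?T = "filter (\<lambda>z. z \<noteq> b) t"
    have "filter (\<lambda>z. z \<noteq> b) (s @ [x] @ us @ t) = filter (\<lambda>z. z \<noteq> b) (s @ us @ [x] @ t)"
      by (simp only: f1 f2)
    then have xe: "x # ?U = ?U @ [x]" using xb by simp
    have "x \<notin> set ?U" using xus by simp
    then have U: "?U = []" using xe by (cases ?U) auto
    have "us = [b]"
    proof (cases us)
      case Nil then show ?thesis using us by simp
    next
      case (Cons z zs)
      have "\<forall>y\<in>set us. y = b" using U by (simp add: filter_empty_conv)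
      moreover have "distinct us" using d1 by simp
      ultimately show ?thesis using Cons by (cases zs) auto
    qed
    then have w1e: "s @ [x] @ us @ t = (s @ [x]) @ [b] @ t" and w1e': "s @ us @ [x] @ t = s @ [b] @ (x # t)"
      by simp_all
    obtain k where k: "x = X k" using x by (cases x) auto
    have kF: "k \<notin> F" using F d1 \<open>us = [b]\<close> k by auto
    have bA: "is_A b" using h(1) b_def by simp
    have de1: "distinct ((s @ [x]) @ [b] @ t)" using d1 unfolding w1e .
    have de2: "distinct (s @ [b] @ (x # t))" using d1' unfolding w1e' .
    have w2a: "w2 = (s @ [x]) @ t" using f1 filter_del[OF de1] unfolding w1e by simp
    have w2b: "w2 = s @ (x # t)" using f2 filter_del[OF de2] unfolding w1e' by simp
    have l1: "lab F (s @ [x] @ us @ t) w2 = labdel F (s @ [x]) b"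
      unfolding w1e using lab_del[OF de1 bA, of F] w2a by simp
    have l2: "lab F (s @ us @ [x] @ t) w2 = labdel F s b"
      unfolding w1e' using lab_del[OF de2 bA, of F] w2b by simp
    have "labdel F (s @ [x]) b = X k" using kF k pk_X[of s k] unfolding labdel_def by simp
    moreover have "labdel F s b \<noteq> X k"
    proof
      assume a: "labdel F s b = X k"
      have "labdel F s b \<in> set (s @ [b])" by (rule labdel_in)
      then show False using a d1 h(1) b_def k by auto
    qed
    ultimately show False using l l1 l2 by simp
  next
    fix p1 b1 q1 p2 y q2
    assume h: "s @ [x] @ us @ t = p1 @ [b1] @ q1" "w2 = p1 @ q1"
      "s @ us @ [x] @ t = p2 @ q2" "w2 = p2 @ [y] @ q2"
    have "length (s @ [x] @ us @ t) = length w2 + 1" unfolding h(1) h(2) by simp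
    moreover have "length w2 = length (s @ us @ [x] @ t) + 1" unfolding h(3) h(4) by simp
    ultimately show False by simp
  next
    fix p1 y q1 p2 b2 q2
    assume h: "s @ [x] @ us @ t = p1 @ q1" "w2 = p1 @ [y] @ q1"
      "s @ us @ [x] @ t = p2 @ [b2] @ q2" "w2 = p2 @ q2"
    have "length w2 = length (s @ [x] @ us @ t) + 1" unfolding h(1) h(2) by simp
    moreover have "length (s @ us @ [x] @ t) = length w2 + 1" unfolding h(3) h(4) by simp
    ultimately show False by simp
  next
    fix p1 y1 q1 p2 y2 q2
    assume h: "is_X y1" "s @ [x] @ us @ t = p1 @ q1" "w2 = p1 @ [y1] @ q1"
      "is_X y2" "s @ us @ [x] @ t = p2 @ q2" "w2 = p2 @ [y2] @ q2"
    have "y1 = y2"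
      by (rule set_ins_eq[of p1 y1 q1 p2 y2 q2]) (use d2 h seq in simp_all)
    have dd1: "distinct (p1 @ [y1] @ q1)" using d2 unfolding h(3) .
    have dd2: "distinct (p2 @ [y2] @ q2)" using d2 unfolding h(6) .
    have e1: "s @ [x] @ us @ t = filter (\<lambda>z. z \<noteq> y1) w2"
      unfolding h(2) h(3) by (rule filter_del[OF dd1, symmetric])
    have e2: "s @ us @ [x] @ t = filter (\<lambda>z. z \<noteq> y2) w2"
      unfolding h(5) h(6) by (rule filter_del[OF dd2, symmetric])
    have "s @ [x] @ us @ t = s @ us @ [x] @ t" using e1 e2 \<open>y1 = y2\<close> by simp
    then have "x # (us @ t) = us @ x # t" by simp
    then show False using us xus by (cases us) auto
  qed
qed

lemma Uword:
  assumes c01: "shuffle_cover M N w0 w1" and c12: "shuffle_cover M N w1 w2"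
    and c01': "shuffle_cover M N w0 w1'" and c12': "shuffle_cover M N w1' w2"
    and F: "\<forall>k\<in>F. X k \<in> set w0"
    and l1: "lab F w0 w1 = lab F w0 w1'"
    and l2: "lab (F \<union> Sx w0 w1) w1 w2 = lab (F \<union> Sx w0 w1') w1' w2"
  shows "w1 = w1'"
proof -
  from FS[OF c01 c01' l1] show ?thesis
  proof (elim disjE exE conjE)
    fix s1 t1 s2 t2 x
    assume h: "is_X x" "w0 = s1 @ t1" "w0 = s2 @ t2" "w1 = s1 @ [x] @ t1" "w1' = s2 @ [x] @ t2"
    have "Sx w0 w1 = {}" unfolding h(2) h(4) by (rule Sx_ins)
    moreover have "Sx w0 w1' = {}" unfolding h(3) h(5) by (rule Sx_ins)
    ultimately have l: "lab F w1 w2 = lab F w1' w2" using l2 by simp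
    have "s1 @ t1 = s2 @ t2" using h by simp
    then obtain us where "(s1 = s2 @ us \<and> us @ t1 = t2) \<or> (s1 @ us = s2 \<and> t1 = us @ t2)"
      unfolding append_eq_append_conv2 by blast
    then show ?thesis
    proof (elim disjE conjE)
      assume e: "s1 = s2 @ us" "us @ t1 = t2"
      show ?thesis
      proof (cases "us = []")
        case True then show ?thesis using e h by simp
      next
        case False
        have False
          by (rule Uh[of M N s2 x us t1 w2 F]) (use c12 c12' e h l False F in simp_all)
        then show ?thesis ..
      qed
    next
      assume e: "s1 @ us = s2" "t1 = us @ t2"
      show ?thesis
      proof (cases "us = []")
        case True then show ?thesis using e h by simp
      next
        case False
        have False
          by (rule Uh[of M N s1 x us t2 w2 F]) (use c12 c12' e(1)[symmetric] e(2) h l False F in simp_all)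
        then show ?thesis ..
      qed
    qed
  qed
qed



lemma ch_len: "c \<in> shuffle_chains M N \<Longrightarrow> length c = Suc (M + N)"
  unfolding shuffle_chains_def by simp

lemma ch_cover: "c \<in> shuffle_chains M N \<Longrightarrow> t < M + N \<Longrightarrow> shuffle_cover M N (c!t) (c!Suc t)"
  unfolding shuffle_chains_def by simp

lemma ch_sw: "c \<in> shuffle_chains M N \<Longrightarrow> t \<le> M + N \<Longrightarrow> shuffle_word M N (c!t)"
proof -
  assume c: "c \<in> shuffle_chains M N" and t: "t \<le> M + N"
  show ?thesis
  proof (cases "t = M + N")
    case True
    then show ?thesis
    proof (cases t)
      case 0
      then have "c ! 0 = shuffle_bot M" "M = 0" "N = 0" using c True unfolding shuffle_chains_def by auto
      then show ?thesis using 0 unfolding shuffle_word_def shuffle_bot_def by simp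
    next
      case (Suc t')
      then show ?thesis using cover_sw[OF ch_cover[OF c, of t']] True by simp
    qed
  next
    case False
    then show ?thesis using cover_sw[OF ch_cover[OF c, of t]] t by simp
  qed
qed

lemma lab_len: "c \<in> shuffle_chains M N \<Longrightarrow> length (shuffle_labeling c) = M + N"
  unfolding shuffle_labeling_def using ch_len by simp

lemma lab_nth: "c \<in> shuffle_chains M N \<Longrightarrow> t < M + N \<Longrightarrow>
  shuffle_labeling c ! t = lab (Fh c t) (c!t) (c!Suc t)"
  unfolding shuffle_labeling_def using ch_len label_at by simp

lemma X_persist: "shuffle_cover M N w w' \<Longrightarrow> X k \<in> set w \<Longrightarrow> X k \<in> set w'"
  using cover_cases[of M N w w'] by (cases "X k") auto

lemma A_back: "shuffle_cover M N w w' \<Longrightarrow> is_A g \<Longrightarrow> g \<in> set w' \<Longrightarrow> g \<in> set w"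
  using cover_cases[of M N w w'] by (cases g) auto

lemma Sx_in: "k \<in> Sx w w' \<Longrightarrow> X k \<in> set w'"
  unfolding Sx_def stepX_def by auto

lemma Fh_sub: "c \<in> shuffle_chains M N \<Longrightarrow> t \<le> M + N \<Longrightarrow> \<forall>k\<in>Fh c t. X k \<in> set (c!t)"
proof (induction t)
  case 0 then show ?case by (simp add: Fh_0)
next
  case (Suc t)
  then show ?case using X_persist[OF ch_cover[OF Suc.prems(1), of t]] Sx_in
    by (auto simp: Fh_Suc)
qed

lemma Fh_eq: "(\<And>j. j \<le> t \<Longrightarrow> c!j = d!j) \<Longrightarrow> Fh c t = Fh d t"
proof -
  assume a: "\<And>j. j \<le> t \<Longrightarrow> c!j = d!j"
  have "xa_step c j k = xa_step d j k" if "j < t" for j k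
    unfolding xa_step_def using a[of j] a[of "Suc j"] that by simp
  then show ?thesis unfolding Fh_def by blast
qed

lemma X_persist_ch:
  assumes c: "c \<in> shuffle_chains M N" and "j \<le> j'" "j' \<le> M + N" "X k \<in> set (c!j)"
  shows "X k \<in> set (c!j')"
  using assms(2,3,4)
proof (induction j' rule: dec_induct)
  case base then show ?case by simp
next
  case (step m) then show ?case using X_persist[OF ch_cover[OF c, of m]] by simp
qed

lemma A_back_ch:
  assumes c: "c \<in> shuffle_chains M N" and "j \<le> j'" "j' \<le> M + N" "is_A g"
  shows "g \<in> set (c!j') \<Longrightarrow> g \<in> set (c!j)"
  using assms(2,3)
proof (induction j' rule: dec_induct)
  case base then show ?case by simp
next
  case (step m) then show ?case using A_back[OF ch_cover[OF c, of m] assms(4)] by simp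
qed

lemma chain_swap:
  assumes c: "c \<in> shuffle_chains M N" and i: "Suc i < M + N"
    and ne: "shuffle_labeling c ! i \<noteq> shuffle_labeling c ! Suc i"
  shows "\<exists>w'. c[Suc i := w'] \<in> shuffle_chains M N \<and>
     shuffle_labeling (c[Suc i := w']) =
       (shuffle_labeling c)[i := shuffle_labeling c ! Suc i, Suc i := shuffle_labeling c ! i]"
proof -
  define n where "n = M + N"
  define w0 where "w0 = c!i"
  define w1 where "w1 = c!Suc i"
  define w2 where "w2 = c!Suc (Suc i)"
  define F where "F = Fh c i"
  have lc: "length c = Suc n" using ch_len[OF c] n_def by simp
  have c1: "shuffle_cover M N w0 w1" using ch_cover[OF c, of i] i w0_def w1_def by simp
  have c2: "shuffle_cover M N w1 w2" using ch_cover[OF c, of "Suc i"] i w1_def w2_def by simp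
  have Fs: "\<forall>k\<in>F. X k \<in> set w0" using Fh_sub[OF c, of i] i F_def w0_def by simp
  have FS1: "Fh c (Suc i) = F \<union> Sx w0 w1" using Fh_Suc F_def w0_def w1_def by simp
  have FS2: "Fh c (Suc (Suc i)) = F \<union> Sx w0 w1 \<union> Sx w1 w2" using Fh_Suc FS1 w1_def w2_def by simp
  have L0: "shuffle_labeling c ! i = lab F w0 w1" using lab_nth[OF c, of i] i F_def w0_def w1_def by simp
  have L1: "shuffle_labeling c ! Suc i = lab (F \<union> Sx w0 w1) w1 w2"
    using lab_nth[OF c, of "Suc i"] i FS1 w1_def w2_def by simp
  obtain w' where ok: "swapok M N F w0 w1 w2 w'"
    using swap_word[OF c1 c2 Fs] ne L0 L1 by auto
  define c' where "c' = c[Suc i := w']"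
  have lc': "length c' = Suc n" using lc c'_def by simp
  have nth': "c'!j = (if j = Suc i then w' else c!j)" if "j < Suc n" for j
    using that lc c'_def by simp
  have cv': "shuffle_cover M N (c'!t) (c'!Suc t)" if "t < n" for t
  proof -
    consider "t = i" | "t = Suc i" | "t \<noteq> i" "t \<noteq> Suc i" by blast
    then show ?thesis
    proof cases
      case 1 then show ?thesis using ok nth' that i w0_def unfolding swapok_def by simp
    next
      case 2 then show ?thesis using ok nth' that i w2_def unfolding swapok_def by simp
    next
      case 3 then show ?thesis using ch_cover[OF c, of t] nth' that n_def by simp
    qed
  qed
  have inCh: "c' \<in> shuffle_chains M N"
    unfolding shuffle_chains_def using lc' cv' nth'[of 0] nth'[of n] c i n_def
    unfolding shuffle_chains_def by auto
  have F1: "Fh c' t = Fh c t" if "t \<le> i" for t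
    by (rule Fh_eq) (use that nth' i n_def in auto)
  have F2: "Fh c' (Suc i) = F \<union> Sx w0 w'"
    using Fh_Suc[of c' i] F1[of i] F_def nth'[of i] nth'[of "Suc i"] i n_def w0_def by simp
  have F3: "Fh c' (Suc (Suc i)) = Fh c (Suc (Suc i))"
    using Fh_Suc[of c' "Suc i"] F2 FS2 ok nth'[of "Suc i"] nth'[of "Suc (Suc i)"] i n_def w2_def
    unfolding swapok_def by auto
  have F4: "Fh c' t = Fh c t" if "Suc (Suc i) \<le> t" "t \<le> n" for t
    using that
  proof (induction t rule: dec_induct)
    case base then show ?case using F3 by simp
  next
    case (step m)
    then show ?case using Fh_Suc[of c' m] Fh_Suc[of c m] nth'[of m] nth'[of "Suc m"] by simp
  qed
  have labs: "shuffle_labeling c' =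
       (shuffle_labeling c)[i := shuffle_labeling c ! Suc i, Suc i := shuffle_labeling c ! i]"
  proof (rule nth_equalityI)
    show "length (shuffle_labeling c') = length ((shuffle_labeling c)[i := shuffle_labeling c ! Suc i, Suc i := shuffle_labeling c ! i])"
      using lab_len[OF inCh] lab_len[OF c] by simp
  next
    fix t assume "t < length (shuffle_labeling c')"
    then have t: "t < n" using lab_len[OF inCh] n_def by simp
    have lt: "shuffle_labeling c' ! t = lab (Fh c' t) (c'!t) (c'!Suc t)"
      using lab_nth[OF inCh] t n_def by simp
    consider "t < i" | "t = i" | "t = Suc i" | "Suc (Suc i) \<le> t" by linarith
    then show "shuffle_labeling c' ! t = (shuffle_labeling c)[i := shuffle_labeling c ! Suc i, Suc i := shuffle_labeling c ! i] ! t"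
    proof cases
      case 1
      then show ?thesis using lt F1[of t] nth'[of t] nth'[of "Suc t"] lab_nth[OF c, of t] t n_def lab_len[OF c]
        by simp
    next
      case 2
      then show ?thesis using lt F1[of t] nth'[of t] nth'[of "Suc t"] ok L1 t n_def lab_len[OF c] i
        F_def w0_def unfolding swapok_def by simp
    next
      case 3
      then show ?thesis using lt F2 nth'[of t] nth'[of "Suc t"] ok L0 t n_def lab_len[OF c] i
        w2_def unfolding swapok_def by simp
    next
      case 4
      then show ?thesis using lt F4[of t] nth'[of t] nth'[of "Suc t"] lab_nth[OF c, of t] t n_def lab_len[OF c]
        by simp
    qed
  qed
  show ?thesis using inCh labs c'_def by blast
qed

lemma chain_uniq:
  assumes c: "c \<in> shuffle_chains M N" and d: "d \<in> shuffle_chains M N"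
    and l: "shuffle_labeling c = shuffle_labeling d"
    and m: "0 < m" "m < M + N"
    and eq: "\<And>j. j \<le> M + N \<Longrightarrow> j \<noteq> m \<Longrightarrow> c!j = d!j"
  shows "c = d"
proof -
  obtain i where mi: "m = Suc i" using m by (cases m) auto
  define w0 where "w0 = c!i"
  define w2 where "w2 = c!Suc m"
  define F where "F = Fh c i"
  have e0: "d!i = w0" using eq[of i] mi m w0_def by simp
  have e2: "d!Suc m = w2" using eq[of "Suc m"] m w2_def by simp
  have Fd: "Fh d i = F" unfolding F_def by (rule Fh_eq) (use eq mi m in auto)
  have c01: "shuffle_cover M N w0 (c!m)" using ch_cover[OF c, of i] mi m w0_def by simp
  have c12: "shuffle_cover M N (c!m) w2" using ch_cover[OF c, of m] m w2_def by simp
  have d01: "shuffle_cover M N w0 (d!m)" using ch_cover[OF d, of i] mi m e0 by simp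
  have d12: "shuffle_cover M N (d!m) w2" using ch_cover[OF d, of m] m e2 by simp
  have Fs: "\<forall>k\<in>F. X k \<in> set w0" using Fh_sub[OF c, of i] mi m F_def w0_def by simp
  have l1: "lab F w0 (c!m) = lab F w0 (d!m)"
    using arg_cong[OF l, of "\<lambda>L. L!i"] lab_nth[OF c, of i] lab_nth[OF d, of i] mi m Fd F_def w0_def e0
    by simp
  have l2: "lab (F \<union> Sx w0 (c!m)) (c!m) w2 = lab (F \<union> Sx w0 (d!m)) (d!m) w2"
    using arg_cong[OF l, of "\<lambda>L. L!m"] lab_nth[OF c, of m] lab_nth[OF d, of m] m
      Fh_Suc[of c i] Fh_Suc[of d i] mi Fd F_def w0_def e0 w2_def e2 by simp
  have cm: "c!m = d!m" by (rule Uword[OF c01 c12 d01 d12 Fs l1 l2])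
  show ?thesis
  proof (rule nth_equalityI)
    show "length c = length d" using ch_len[OF c] ch_len[OF d] by simp
  next
    fix j assume "j < length c"
    then have "j \<le> M + N" using ch_len[OF c] by simp
    then show "c!j = d!j" using eq cm by (cases "j = m") auto
  qed
qed



fun lrank :: "letter \<Rightarrow> nat" where
  "lrank (A _) = 0" | "lrank (X k) = Suc k"

lemma find_step:
  assumes "P a" "\<not> P b" "a \<le> b"
  shows "\<exists>s. a \<le> s \<and> s < b \<and> P s \<and> \<not> P (Suc s)"
  using assms(3,1,2)
proof (induction b rule: dec_induct)
  case base then show ?case by simp
next
  case (step m)
  then show ?case by (cases "P m") (auto intro: less_SucI)
qed

lemma XO: "shuffle_word M N (p @ [X m] @ q @ [X k] @ r) \<Longrightarrow> m < k"
  unfolding shuffle_word_def by (simp add: sorted_wrt_append)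

lemma bef_split:
  assumes "filter Q (p @ [g] @ q) = [g, y]" "Q g" "g \<noteq> y"
  shows "y \<in> set q"
proof -
  have e: "filter Q p @ g # filter Q q = [g, y]" using assms(1,2) by simp
  show ?thesis
  proof (cases "filter Q p")
    case Nil
    then have "filter Q q = [y]" using e by simp
    then have "y \<in> set (filter Q q)" by simp
    then show ?thesis by simp
  next
    case (Cons z zs)
    then show ?thesis using e assms(3) by (cases zs) auto
  qed
qed

lemma filter_single:
  assumes "distinct xs" "g \<in> set xs" "\<And>z. z \<in> set xs \<Longrightarrow> Q z \<longleftrightarrow> z = g"
  shows "filter Q xs = [g]"
proof -
  have "filter Q xs = filter (\<lambda>z. z = g) xs" using assms(3) by (rule filter_cong[OF refl])
  also have "\<dots> = [g]" using assms(1,2)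
  proof (induction xs)
    case Nil then show ?case by simp
  next
    case (Cons y ys)
    show ?case
    proof (cases "y = g")
      case True
      then have "filter (\<lambda>z. z = g) ys = []" using Cons.prems by (auto simp: filter_empty_conv)
      then show ?thesis using True by simp
    next
      case False then show ?thesis using Cons by simp
    qed
  qed
  finally show ?thesis .
qed

lemma bef_step:
  assumes cv: "shuffle_cover M N w w'" and g: "is_A g" "g \<in> set w'" and xk: "X k \<in> set w"
    and f: "filter (\<lambda>z. z = g \<or> z = X k) w = [g, X k]"
  shows "filter (\<lambda>z. z = g \<or> z = X k) w' = [g, X k]"
proof -
  have dw: "distinct w" and dw': "distinct w'" using cover_sw[OF cv] sw_distinct by blast+
  from cover_cases[OF cv] show ?thesis
  proof (elim disjE exE conjE)
    fix u a v assume h: "is_A a" "w = u @ [a] @ v" "w' = u @ v"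
    have "a \<noteq> g" using dw g(2) h by auto
    moreover have "a \<noteq> X k" using h(1) by auto
    ultimately show ?thesis using f h by simp
  next
    fix u y v assume h: "is_X y" "w = u @ v" "w' = u @ [y] @ v"
    have "y \<noteq> g" using h(1) g(1) XnA by blast
    moreover have "y \<noteq> X k" using dw' h xk by auto
    ultimately show ?thesis using f h by simp
  qed
qed

lemma noA:
  assumes c: "c \<in> shuffle_chains M N" and i: "i < M + N"
    and e0: "c!i = s @ t" and e1: "c!Suc i = s @ [X k] @ t"
    and srt: "\<And>j. i < j \<Longrightarrow> j < M + N \<Longrightarrow> Suc k \<le> lrank (shuffle_labeling c ! j)"
  shows "\<forall>g\<in>set s. is_X g"
proof (rule ccontr)
  assume "\<not> (\<forall>g\<in>set s. is_X g)"
  then obtain g where gs: "g \<in> set s" and gnX: "\<not> is_X g" by blast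
  have gA: "is_A g" using gnX by (cases g) auto
  define n where "n = M + N"
  define Q where "Q = (\<lambda>z. z = g \<or> z = X k)"
  have d1: "distinct (s @ [X k] @ t)" using ch_sw[OF c, of "Suc i"] i e1 sw_distinct by fastforce
  have gk: "g \<noteq> X k" using gA by auto
  have f1: "filter Q (c!Suc i) = [g, X k]"
  proof -
    have "filter Q s = [g]" by (rule filter_single) (use d1 gs Q_def in auto)
    moreover have "filter Q t = []" using d1 gs Q_def by (auto simp: filter_empty_conv)
    ultimately show ?thesis using e1 Q_def by simp
  qed
  have top: "c!n = shuffle_top N" using c n_def unfolding shuffle_chains_def by simp
  have gn: "g \<notin> set (c!n)" using top gA unfolding shuffle_top_def by auto
  have gi: "g \<in> set (c!Suc i)" using e1 gs by simp
  obtain s' where s': "Suc i \<le> s'" "s' < n" "g \<in> set (c!s')" "g \<notin> set (c!Suc s')"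
    using find_step[of "\<lambda>j. g \<in> set (c!j)" "Suc i" n] gi gn i n_def by auto
  have xki: "X k \<in> set (c!Suc i)" using e1 by simp
  have bef: "filter Q (c!j) = [g, X k]" if "Suc i \<le> j" "j \<le> s'" for j
    using that
  proof (induction j rule: dec_induct)
    case base then show ?case using f1 by simp
  next
    case (step m)
    have "g \<in> set (c!Suc m)" using A_back_ch[OF c, of "Suc m" s' g] step s' gA n_def by simp
    moreover have "X k \<in> set (c!m)" using X_persist_ch[OF c, of "Suc i" m k] step s' xki n_def by simp
    ultimately show ?case
      using bef_step[OF ch_cover[OF c, of m] gA] step s' n_def Q_def by simp
  qed
  have bs: "filter Q (c!s') = [g, X k]" using bef[of s'] s' by simp
  have cv: "shuffle_cover M N (c!s') (c!Suc s')" using ch_cover[OF c, of s'] s' n_def by simp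
  have ds: "distinct (c!s')" using cover_sw[OF cv] sw_distinct by blast
  from cover_cases[OF cv] show False
  proof (elim disjE exE conjE)
    fix u y v assume h: "is_X y" "c!s' = u @ v" "c!Suc s' = u @ [y] @ v"
    then show False using s' by simp
  next
    fix u a v assume h: "is_A a" "c!s' = u @ [a] @ v" "c!Suc s' = u @ v"
    have ag: "a = g" using h s'(3,4) by auto
    have da: "distinct (u @ [g] @ v)" using ds h ag by simp
    have L: "shuffle_labeling c ! s' = labdel (Fh c s') u g"
      using lab_nth[OF c, of s'] s' n_def h ag lab_del[OF da gA] by simp
    have r: "Suc k \<le> lrank (shuffle_labeling c ! s')" using srt[of s'] s' n_def by simp
    have kv: "X k \<in> set v"
      by (rule bef_split[of Q u g v]) (use bs h ag Q_def gk in simp_all)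
    from labdel_cases[of "Fh c s'" u g] show False
    proof (elim disjE exE conjE)
      assume "labdel (Fh c s') u g = g"
      then show False using L r gA by (cases g) auto
    next
      fix m assume hm: "pk u = Some m" "labdel (Fh c s') u g = X m"
      obtain u0 where u0: "u = u0 @ [X m]" using pk_Some[OF hm(1)] by blast
      obtain v1 v2 where v: "v = v1 @ X k # v2" using split_list[OF kv] by blast
      have "shuffle_word M N (u0 @ [X m] @ (g # v1) @ [X k] @ v2)"
        using ch_sw[OF c, of s'] s' n_def h ag u0 v by simp
      then have "m < k" by (rule XO)
      then show False using L r hm by simp
    qed
  qed
qed

lemma ins_pos:
  assumes w1: "shuffle_word M N (s1 @ [X k] @ t1)" and w2: "shuffle_word M N (s2 @ [X k] @ t2)"
    and e: "s1 @ t1 = s2 @ t2" and a1: "\<forall>g\<in>set s1. is_X g" and a2: "\<forall>g\<in>set s2. is_X g"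
  shows "s1 = s2"
proof -
  obtain us where "(s1 = s2 @ us \<and> us @ t1 = t2) \<or> (s1 @ us = s2 \<and> t1 = us @ t2)"
    using e unfolding append_eq_append_conv2 by blast
  then show ?thesis
  proof (elim disjE conjE)
    assume h: "s1 = s2 @ us" "us @ t1 = t2"
    show ?thesis
    proof (cases us)
      case Nil then show ?thesis using h by simp
    next
      case (Cons z zs)
      have "is_X z" using a1 h Cons by simp
      then obtain m where z: "z = X m" by (cases z) auto
      have "shuffle_word M N (s2 @ [X m] @ zs @ [X k] @ t1)" using w1 h Cons z by simp
      then have "m < k" by (rule XO)
      moreover have "shuffle_word M N (s2 @ [X k] @ [] @ [X m] @ (zs @ t1))" using w2 h Cons z by simp
      then have "k < m" by (rule XO)
      ultimately show ?thesis by simp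
    qed
  next
    assume h: "s1 @ us = s2" "t1 = us @ t2"
    show ?thesis
    proof (cases us)
      case Nil then show ?thesis using h by simp
    next
      case (Cons z zs)
      have "is_X z" using a2 h Cons by auto
      then obtain m where z: "z = X m" by (cases z) auto
      have "shuffle_word M N (s1 @ [X m] @ zs @ [X k] @ t2)" using w2 h Cons z by auto
      then have "m < k" by (rule XO)
      moreover have "shuffle_word M N (s1 @ [X k] @ [] @ [X m] @ (zs @ t2))" using w1 h Cons z by simp
      then have "k < m" by (rule XO)
      ultimately show ?thesis by simp
    qed
  qed
qed



lemma sorted_inj:
  assumes c: "c \<in> shuffle_chains M N" and d: "d \<in> shuffle_chains M N"
    and l: "shuffle_labeling c = shuffle_labeling d"
    and srt: "\<And>i j. i \<le> j \<Longrightarrow> j < M + N \<Longrightarrow>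
       lrank (shuffle_labeling c ! i) \<le> lrank (shuffle_labeling c ! j)"
  shows "c = d"
proof (rule ccontr)
  assume ne: "c \<noteq> d"
  define n where "n = M + N"
  have "\<exists>t. t \<le> n \<and> c!t \<noteq> d!t"
  proof (rule ccontr)
    assume "\<not> (\<exists>t. t \<le> n \<and> c!t \<noteq> d!t)"
    then have "c = d" using ch_len[OF c] ch_len[OF d] n_def
      by (intro nth_equalityI) (auto simp: less_Suc_eq_le)
    then show False using ne by simp
  qed
  then obtain t0 where t0: "t0 \<le> n" "c!t0 \<noteq> d!t0" by blast
  obtain t where t: "t \<le> t0" "\<forall>j<t. c!j = d!j" "c!t \<noteq> d!t"
    using ex_least_nat_le[of "\<lambda>j. c!j \<noteq> d!j" t0] t0 by blast
  have "t \<noteq> 0"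
  proof
    assume "t = 0"
    then show False using t(3) c d unfolding shuffle_chains_def by simp
  qed
  then obtain i where ti: "t = Suc i" by (cases t) auto
  have i: "i < n" using ti t t0 by simp
  define w where "w = c!i"
  have dw: "d!i = w" using t ti w_def by simp
  have Fe: "Fh d i = Fh c i" by (rule Fh_eq) (use t ti in auto)
  have cw: "shuffle_cover M N w (c!t)" using ch_cover[OF c, of i] i ti n_def w_def by simp
  have dcw: "shuffle_cover M N w (d!t)" using ch_cover[OF d, of i] i ti n_def dw by simp
  have Lc: "shuffle_labeling c ! i = lab (Fh c i) w (c!t)" using lab_nth[OF c, of i] i ti n_def w_def by simp
  have Ld: "shuffle_labeling d ! i = lab (Fh c i) w (d!t)" using lab_nth[OF d, of i] i ti n_def dw Fe by simp
  have ll: "lab (Fh c i) w (c!t) = lab (Fh c i) w (d!t)" using Lc Ld l by simp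
  from FS[OF cw dcw ll] t(3) obtain s1 t1 s2 t2 x where
    h: "is_X x" "w = s1 @ t1" "w = s2 @ t2" "c!t = s1 @ [x] @ t1" "d!t = s2 @ [x] @ t2" by blast
  obtain k where xk: "x = X k" using h(1) by (cases x) auto
  have sc: "shuffle_word M N (s1 @ [X k] @ t1)" using ch_sw[OF c, of t] ti i n_def h xk by simp
  have sd: "shuffle_word M N (s2 @ [X k] @ t2)" using ch_sw[OF d, of t] ti i n_def h xk by simp
  have dc: "distinct (s1 @ [x] @ t1)" using sc xk sw_distinct by blast
  have Li: "shuffle_labeling c ! i = X k" using Lc h(2) h(4) lab_ins[OF dc h(1)] xk by simp
  have srt': "Suc k \<le> lrank (shuffle_labeling c ! j)" if "i < j" "j < M + N" for j
    using srt[of i j] that Li by simp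
  have a1: "\<forall>g\<in>set s1. is_X g"
    by (rule noA[OF c, of i s1 t1 k]) (use i n_def w_def h ti xk srt' in simp_all)
  have a2: "\<forall>g\<in>set s2. is_X g"
    by (rule noA[OF d, of i s2 t2 k]) (use i n_def dw h ti xk srt' l in simp_all)
  have "s1 = s2" by (rule ins_pos[OF sc sd _ a1 a2]) (use h in simp)
  then have "t1 = t2" using h by simp
  then show False using \<open>s1 = s2\<close> h t(3) by simp
qed

fun invc :: "nat list \<Rightarrow> nat" where
  "invc [] = 0"
| "invc (x # xs) = length (filter (\<lambda>y. y < x) xs) + invc xs"

lemma len_filter_swap:
  assumes "Suc i < length xs"
  shows "length (filter P (xs[i := xs!Suc i, Suc i := xs!i])) = length (filter P xs)"
proof -
  have "mset (xs[i := xs!Suc i, Suc i := xs!i]) = mset xs"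
    using mset_swap[of "Suc i" xs i] assms by simp
  then show ?thesis by (metis mset_filter size_mset)
qed

lemma inv_swap:
  "Suc i < length r \<Longrightarrow> r!Suc i < r!i \<Longrightarrow> invc (r[i := r!Suc i, Suc i := r!i]) < invc r"
proof (induction r arbitrary: i)
  case Nil then show ?case by simp
next
  case (Cons x xs)
  show ?case
  proof (cases i)
    case 0
    then obtain y ys where xs: "xs = y # ys" using Cons.prems by (cases xs) auto
    have "y < x" using Cons.prems 0 xs by simp
    then show ?thesis using 0 xs by simp
  next
    case (Suc i')
    have p1: "Suc i' < length xs" and p2: "xs!Suc i' < xs!i'" using Cons.prems Suc by auto
    have "(x # xs)[i := (x # xs) ! Suc i, Suc i := (x # xs) ! i] = x # xs[i' := xs!Suc i', Suc i' := xs!i']"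
      using Suc by simp
    then show ?thesis using Cons.IH[OF p1 p2] len_filter_swap[OF p1] by simp
  qed
qed

lemma inj_main:
  assumes "c \<in> shuffle_chains M N" "d \<in> shuffle_chains M N"
    "shuffle_labeling c = shuffle_labeling d"
  shows "c = d"
proof -
  have "\<forall>c d. c \<in> shuffle_chains M N \<longrightarrow> d \<in> shuffle_chains M N \<longrightarrow>
      shuffle_labeling c = shuffle_labeling d \<longrightarrow> invc (map lrank (shuffle_labeling c)) = K \<longrightarrow> c = d" for K
  proof (induction K rule: less_induct)
    case (less K)
    show ?case
    proof (intro allI impI)
      fix c d assume c: "c \<in> shuffle_chains M N" and d: "d \<in> shuffle_chains M N"
        and l: "shuffle_labeling c = shuffle_labeling d" and K: "invc (map lrank (shuffle_labeling c)) = K"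
      define L where "L = shuffle_labeling c"
      define r where "r = map lrank L"
      have lL: "length L = M + N" using lab_len[OF c] L_def by simp
      show "c = d"
      proof (cases "\<exists>i. Suc i < M + N \<and> r!Suc i < r!i")
        case True
        then obtain i where i: "Suc i < M + N" "r!Suc i < r!i" by blast
        have ne: "L!i \<noteq> L!Suc i" using i r_def lL by auto
        obtain w1 where w1: "c[Suc i := w1] \<in> shuffle_chains M N"
          "shuffle_labeling (c[Suc i := w1]) = L[i := L!Suc i, Suc i := L!i]"
          using chain_swap[OF c i(1)] ne L_def by blast
        obtain w2 where w2: "d[Suc i := w2] \<in> shuffle_chains M N"
          "shuffle_labeling (d[Suc i := w2]) = L[i := L!Suc i, Suc i := L!i]"
          using chain_swap[OF d i(1)] ne L_def l by auto
        have "invc (map lrank (L[i := L!Suc i, Suc i := L!i])) = invc (r[i := r!Suc i, Suc i := r!i])"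
          using i lL r_def by (simp add: map_update)
        also have "\<dots> < K" using inv_swap[of i r] i lL r_def K L_def by simp
        finally have "c[Suc i := w1] = d[Suc i := w2]"
          using less.IH w1 w2 by metis
        then have eq: "c!j = d!j" if "j \<le> M + N" "j \<noteq> Suc i" for j
          using that by (metis nth_list_update_neq)
        show "c = d" by (rule chain_uniq[OF c d l _ i(1) eq]) simp_all
      next
        case False
        then have "sorted r" unfolding sorted_iff_nth_Suc using r_def lL by auto
        then have srt: "lrank (L!i) \<le> lrank (L!j)" if "i \<le> j" "j < M + N" for i j
          using sorted_nth_mono[of r i j] that r_def lL by simp
        show "c = d" by (rule sorted_inj[OF c d l]) (use srt L_def in simp)
      qed
    qed
  qed
  then show ?thesis using assms by blast
qed

theorem proposition3p3:
  fixes M N :: nat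
  shows "S_labeling (shuffle_chains M N) (M + N) shuffle_labeling"
  unfolding S_labeling_def
proof (intro conjI)
  show "is_labeling (shuffle_chains M N) (M + N) shuffle_labeling"
    unfolding is_labeling_def using lab_len by blast
next
  show "inj_on shuffle_labeling (shuffle_chains M N)"
    by (rule inj_onI) (rule inj_main)
next
  show "\<forall>c\<in>shuffle_chains M N. \<forall>i\<in>{1..M + N - 1}.
     shuffle_labeling c ! (i - 1) \<noteq> shuffle_labeling c ! i \<longrightarrow>
     (\<exists>!c'. c' \<in> shuffle_chains M N \<and> (\<forall>j\<le>M + N. j \<noteq> i \<longrightarrow> c' ! j = c ! j) \<and>
           shuffle_labeling c' = (shuffle_labeling c)[i - 1 := shuffle_labeling c ! i, i := shuffle_labeling c ! (i - 1)])"
  proof (intro ballI impI)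
    fix c i assume c: "c \<in> shuffle_chains M N" and i: "i \<in> {1..M + N - 1}"
      and ne: "shuffle_labeling c ! (i - 1) \<noteq> shuffle_labeling c ! i"
    obtain i0 where i0: "i = Suc i0" using i by (cases i) auto
    have i0n: "Suc i0 < M + N" using i i0 by auto
    obtain w' where w': "c[Suc i0 := w'] \<in> shuffle_chains M N"
      "shuffle_labeling (c[Suc i0 := w']) =
         (shuffle_labeling c)[i0 := shuffle_labeling c ! Suc i0, Suc i0 := shuffle_labeling c ! i0]"
      using chain_swap[OF c i0n] ne i0 by auto
    show "\<exists>!c'. c' \<in> shuffle_chains M N \<and> (\<forall>j\<le>M + N. j \<noteq> i \<longrightarrow> c' ! j = c ! j) \<and>
           shuffle_labeling c' = (shuffle_labeling c)[i - 1 := shuffle_labeling c ! i, i := shuffle_labeling c ! (i - 1)]"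
    proof (rule ex1I)
      show "c[i := w'] \<in> shuffle_chains M N \<and> (\<forall>j\<le>M + N. j \<noteq> i \<longrightarrow> c[i := w'] ! j = c ! j) \<and>
           shuffle_labeling (c[i := w']) = (shuffle_labeling c)[i - 1 := shuffle_labeling c ! i, i := shuffle_labeling c ! (i - 1)]"
        using w' i0 by simp
    next
      fix c' assume h: "c' \<in> shuffle_chains M N \<and> (\<forall>j\<le>M + N. j \<noteq> i \<longrightarrow> c' ! j = c ! j) \<and>
           shuffle_labeling c' = (shuffle_labeling c)[i - 1 := shuffle_labeling c ! i, i := shuffle_labeling c ! (i - 1)]"
      have l: "shuffle_labeling c' = shuffle_labeling (c[i := w'])" using h w' i0 by simp
      have eq: "c'!j = c[i := w']!j" if "j \<le> M + N" "j \<noteq> i" for j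
        using h that by simp
      show "c' = c[i := w']"
        by (rule chain_uniq[OF _ _ l _ _ eq]) (use h w' i0 i0n in simp_all)
    qed
  qed
qed

end
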